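(* Let $d\ge1$, $\sigma>0$, and consider the balanced case $\varpi=\tfrac12$. Let $p:=\mathbb{P}(|Z|\le 1)+\tfrac12\mathbb{P}(|Z|>1)$ where $Z\sim\mathcal N(0,1)$ (so $p<1$). Then the population EM operator $M$ satisfies: (a) for every nonzero $\theta\in\mathbb{R}^d$, $$\frac{\|M(\theta)\|_2}{\|\theta\|_2}\le \gamma_{\mathrm{up}}(\theta):=1-p+\frac{p}{1+\frac{\|\theta\|_2^2}{2\sigma^2}}<1;$$ (b) for every nonzero $\theta\in\mathbb{R}^d$ with $\|\theta\|_2^2\le \frac{5\sigma^2}{8}$, $$\frac{\|M(\theta)\|_2}{\|\theta\|_2}\ge \gamma_{\mathrm{low}}(\theta):=\frac{1}{1+\frac{2\|\theta\|_2^2}{\sigma^2}}.$$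
   Context: Data distribution: $X\sim\mathcal N(0,\sigma^2 I_d)$. For the balanced fit $\tfrac12\mathcal N(\theta,\sigma^2I_d)+\tfrac12\mathcal N(-\theta,\sigma^2I_d)$, define $w_\theta(x)=\frac{\exp(-\|\theta-x\|_2^2/(2\sigma^2))}{\exp(-\|\theta-x\|_2^2/(2\sigma^2))+\exp(-\|\theta+x\|_2^2/(2\sigma^2))}=\frac{1}{1+e^{-2\theta^\top x/\sigma^2}}$, and the population EM operator $M(\theta)=\mathbb{E}[(2w_\theta(X)-1)X]=\mathbb{E}[X\tanh(\theta^\top X/\sigma^2)]$. *)

theory Defs
  imports "HOL-Probability.Probability"
begin

definition iso_gaussian :: "real \<Rightarrow> 'a::euclidean_space measure" where
  "iso_gaussian \<sigma> = density lborel
     (\<lambda>x. ennreal (\<Prod>b\<in>Basis. normal_density 0 \<sigma> (x \<bullet> b)))"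

definition EM_weight :: "real \<Rightarrow> 'a::euclidean_space \<Rightarrow> 'a \<Rightarrow> real" where
  "EM_weight \<sigma> \<theta> x =
     exp (- (norm (\<theta> - x))\<^sup>2 / (2 * \<sigma>\<^sup>2)) /
     (exp (- (norm (\<theta> - x))\<^sup>2 / (2 * \<sigma>\<^sup>2)) + exp (- (norm (\<theta> + x))\<^sup>2 / (2 * \<sigma>\<^sup>2)))"

definition EM_pop :: "real \<Rightarrow> 'a::euclidean_space \<Rightarrow> 'a" where
  "EM_pop \<sigma> \<theta> = integral\<^sup>L (iso_gaussian \<sigma>) (\<lambda>x. (2 * EM_weight \<sigma> \<theta> x - 1) *\<^sub>R x)"

definition p_const :: real where
  "p_const = measure (density lborel std_normal_density) {x. \<bar>x\<bar> \<le> 1}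
     + 1/2 * measure (density lborel std_normal_density) {x. \<bar>x\<bar> > 1}"

end

theory Submission
  imports Defs
begin

lemma tanh_le_id: fixes x :: real assumes "0 \<le> x" shows "tanh x \<le> x"
proof -
  have "(\<lambda>t. t - tanh t) 0 \<le> (\<lambda>t. t - tanh t) x"
  proof (rule DERIV_nonneg_imp_nondecreasing[OF assms])
    fix t :: real
    show "\<exists>y. ((\<lambda>t. t - tanh t) has_real_derivative y) (at t) \<and> 0 \<le> y"
      by (rule exI[of _ "1 - (1 - tanh t ^ 2)"]) (auto intro!: derivative_eq_intros)
  qed
  then show ?thesis by simp
qed

lemma tanh_ge_T3: fixes x :: real assumes "0 \<le> x" shows "x - x^3/3 \<le> tanh x"
proof -
  have "(\<lambda>t. tanh t - t + t^3/3) 0 \<le> (\<lambda>t. tanh t - t + t^3/3) x"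
  proof (rule DERIV_nonneg_imp_nondecreasing[OF assms])
    fix t :: real assume t: "0 \<le> t"
    have "tanh t ^ 2 \<le> t ^ 2" using tanh_le_id[OF t] t by (intro power_mono) auto
    then show "\<exists>y. ((\<lambda>t. tanh t - t + t^3/3) has_real_derivative y) (at t) \<and> 0 \<le> y"
      by (intro exI[of _ "(1 - tanh t ^ 2) - 1 + 3 * t^2 / 3"]) (auto intro!: derivative_eq_intros)
  qed
  then show ?thesis by simp
qed

lemma tanh_le_T5: fixes x :: real assumes "0 \<le> x" shows "tanh x \<le> x - x^3/3 + 2*x^5/15"
proof -
  have "(\<lambda>t. t - t^3/3 + 2*t^5/15 - tanh t) 0 \<le> (\<lambda>t. t - t^3/3 + 2*t^5/15 - tanh t) x"
  proof (rule DERIV_nonneg_imp_nondecreasing[OF assms])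
    fix t :: real assume t: "0 \<le> t"
    have key: "t^2 - 2*t^4/3 \<le> tanh t ^ 2"
    proof (cases "t^2 \<le> 3")
      case True
      have e: "t - t^3/3 = t * (3 - t^2) / 3" by (simp add: power2_eq_square power3_eq_cube algebra_simps)
      have "0 \<le> t * (3 - t^2)" using True t by (intro mult_nonneg_nonneg) auto
      then have "0 \<le> t - t^3/3" unfolding e by simp
      then have "(t - t^3/3)^2 \<le> tanh t ^ 2" using tanh_ge_T3[OF t] by (intro power_mono) auto
      moreover have "(t - t^3/3)^2 = t^2 - 2*t^4/3 + (t^3)^2/9"
        by (simp add: power2_eq_square power3_eq_cube power4_eq_xxxx algebra_simps)
      then have "t^2 - 2*t^4/3 \<le> (t - t^3/3)^2" using zero_le_power2[of "t^3"] by linarith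
      ultimately show ?thesis by linarith
    next
      case False
      have e: "t^2 - 2*t^4/3 = t^2 * (3 - 2*t^2) / 3" by (simp add: power2_eq_square power4_eq_xxxx algebra_simps)
      have "t^2 * (3 - 2*t^2) \<le> 0" using False by (intro mult_nonneg_nonpos) auto
      then have "t^2 - 2*t^4/3 \<le> 0" unfolding e by simp
      then show ?thesis using zero_le_power2[of "tanh t"] by linarith
    qed
    show "\<exists>y. ((\<lambda>t. t - t^3/3 + 2*t^5/15 - tanh t) has_real_derivative y) (at t) \<and> 0 \<le> y"
      by (intro exI[of _ "1 - 3*t^2/3 + 2*(5*t^4)/15 - (1 - tanh t ^ 2)"])
         (use key in \<open>auto intro!: derivative_eq_intros\<close>)
  qed
  then show ?thesis by simp
qed

lemma sinh_ge_id: fixes x :: real assumes "0 \<le> x" shows "x \<le> sinh x"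
proof -
  have "(\<lambda>t. sinh t - t) 0 \<le> (\<lambda>t. sinh t - t) x"
  proof (rule DERIV_nonneg_imp_nondecreasing[OF assms])
    fix t :: real
    show "\<exists>y. ((\<lambda>t. sinh t - t) has_real_derivative y) (at t) \<and> 0 \<le> y"
      by (rule exI[of _ "cosh t - 1"]) (auto intro!: derivative_eq_intros simp: cosh_real_ge_1)
  qed
  then show ?thesis by simp
qed

lemma ln_cosh_le: fixes x :: real assumes "0 \<le> x" shows "ln (cosh x) \<le> x^2/2"
proof -
  have "(\<lambda>t. t^2/2 - ln (cosh t)) 0 \<le> (\<lambda>t. t^2/2 - ln (cosh t)) x"
  proof (rule DERIV_nonneg_imp_nondecreasing[OF assms])
    fix t :: real assume t: "0 \<le> t"
    have "tanh t \<le> t" using tanh_le_id[OF t] .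
    moreover have "sinh t / cosh t = tanh t" by (simp add: tanh_def)
    ultimately show "\<exists>y. ((\<lambda>t. t^2/2 - ln (cosh t)) has_real_derivative y) (at t) \<and> 0 \<le> y"
      by (intro exI[of _ "2*t/2 - sinh t / cosh t"]) (auto intro!: derivative_eq_intros)
  qed
  then show ?thesis by simp
qed

lemma cosh_le_exp_sq: fixes x :: real shows "cosh x \<le> exp (x^2/2)"
proof -
  have "ln (cosh \<bar>x\<bar>) \<le> \<bar>x\<bar>^2/2" by (rule ln_cosh_le) simp
  then have "ln (cosh x) \<le> x^2/2" by simp
  then have "exp (ln (cosh x)) \<le> exp (x^2/2)" by (simp only: exp_le_cancel_iff)
  then show ?thesis by simp
qed

lemma tanh_ge_gauss: fixes x :: real assumes "0 \<le> x" shows "x * exp (-(x^2)/2) \<le> tanh x"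
proof -
  have c: "0 < cosh x" by simp
  have "x * exp (-(x^2)/2) * cosh x \<le> x * exp (-(x^2)/2) * exp (x^2/2)"
    using cosh_le_exp_sq[of x] assms by (intro mult_left_mono) auto
  also have "\<dots> = x" by (simp add: exp_minus field_simps)
  also have "\<dots> \<le> sinh x" by (rule sinh_ge_id[OF assms])
  finally have "x * exp (-(x^2)/2) * cosh x \<le> sinh x" .
  then have "x * exp (-(x^2)/2) \<le> sinh x / cosh x" using c by (simp add: field_simps)
  then show ?thesis by (simp add: tanh_def)
qed

lemma exp_weighted: fixes d \<tau> :: real assumes "\<bar>\<tau>\<bar> \<le> 1"
  shows "exp (\<tau> * d) \<le> cosh d + \<tau> * sinh d"
proof -
  let ?t = "(1 + \<tau>) / 2"
  have t: "0 \<le> ?t" "?t \<le> 1" using assms by auto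
  have "exp ((1 - ?t) *\<^sub>R (-d) + ?t *\<^sub>R d) \<le> (1 - ?t) * exp (-d) + ?t * exp d"
    by (rule convex_onD[OF exp_convex t]) auto
  moreover have "(1 - ?t) *\<^sub>R (-d) + ?t *\<^sub>R d = \<tau> * d" by (simp add: field_simps)
  moreover have "(1 - ?t) * exp (-d) + ?t * exp d = cosh d + \<tau> * sinh d"
    by (simp add: cosh_def sinh_def field_simps)
  ultimately show ?thesis by simp
qed

lemma ln_cosh_convex: fixes x y :: real
  shows "ln (cosh x) + tanh x * (y - x) \<le> ln (cosh y)"
proof -
  have "\<bar>tanh x\<bar> \<le> 1" using tanh_real_bounds[of x] by auto
  then have "exp (tanh x * (y - x)) \<le> cosh (y - x) + tanh x * sinh (y - x)" by (rule exp_weighted)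
  then have "cosh x * exp (tanh x * (y - x)) \<le> cosh x * (cosh (y - x) + tanh x * sinh (y - x))"
    by (intro mult_left_mono) auto
  also have "\<dots> = cosh x * cosh (y - x) + sinh x * sinh (y - x)"
    by (simp add: tanh_def field_simps)
  also have "\<dots> = cosh y" using cosh_add[of x "y - x"] by simp
  finally have "cosh x * exp (tanh x * (y - x)) \<le> cosh y" .
  then have "ln (cosh x * exp (tanh x * (y - x))) \<le> ln (cosh y)" by (subst ln_le_cancel_iff) auto
  then show ?thesis by (simp add: ln_mult)
qed

lemma ln_cosh_lip: fixes x y :: real shows "\<bar>ln (cosh y) - ln (cosh x)\<bar> \<le> \<bar>y - x\<bar>"
proof -
  have 1: "ln (cosh x) + tanh x * (y - x) \<le> ln (cosh y)" by (rule ln_cosh_convex)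
  have 2: "ln (cosh y) + tanh y * (x - y) \<le> ln (cosh x)" by (rule ln_cosh_convex)
  have tx: "\<bar>tanh x\<bar> \<le> 1" "\<bar>tanh y\<bar> \<le> 1" using tanh_real_bounds[of x] tanh_real_bounds[of y] by auto
  have a: "\<bar>tanh x * (y - x)\<bar> \<le> \<bar>y - x\<bar>" unfolding abs_mult
    using mult_right_mono[OF tx(1), of "\<bar>y - x\<bar>"] by simp
  have b: "\<bar>tanh y * (x - y)\<bar> \<le> \<bar>y - x\<bar>" unfolding abs_mult
    using mult_right_mono[OF tx(2), of "\<bar>x - y\<bar>"] by (simp add: abs_minus_commute)
  show ?thesis using 1 2 a b by linarith
qed

lemma weight_bounds: fixes b z :: real assumes "0 \<le> b"
  shows "0 \<le> exp (-(b*z^2)) * (1 + b*z^2)" "exp (-(b*z^2)) * (1 + b*z^2) \<le> 1"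
proof -
  have bz: "0 \<le> b*z^2" using assms by simp
  then show "0 \<le> exp (-(b*z^2)) * (1 + b*z^2)" by simp
  have "1 + b*z^2 \<le> exp (b*z^2)" by (rule exp_ge_add_one_self)
  then show "exp (-(b*z^2)) * (1 + b*z^2) \<le> 1"
    by (simp add: exp_minus field_simps)
qed

lemma nd_weight:
  fixes s z :: real assumes s: "0 < s"
  shows "std_normal_density z * exp (-(((1/s ^ 2 - 1)/2) * z ^ 2)) = s * normal_density 0 s z"
proof -
  have sq: "sqrt (2 * pi * s ^ 2) = sqrt (2*pi) * s" using s by (simp add: real_sqrt_mult)
  have "std_normal_density z * exp (-(((1/s ^ 2 - 1)/2) * z ^ 2))
        = (1 / sqrt (2 * pi)) * (exp (- z\<^sup>2 / 2) * exp (-(((1/s ^ 2 - 1)/2) * z ^ 2)))"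
    by (simp add: std_normal_density_def)
  also have "exp (- z\<^sup>2 / 2) * exp (-(((1/s ^ 2 - 1)/2) * z ^ 2)) = exp (- (z ^ 2) / (2 * s ^ 2))"
    unfolding mult_exp_exp by (rule arg_cong[where f=exp]) (use s in \<open>simp add: field_simps power2_eq_square\<close>)
  moreover have "sqrt (pi * (2 * s\<^sup>2)) = s * sqrt (pi * 2)" using s by (simp add: real_sqrt_mult)
  ultimately show ?thesis using s by (simp add: normal_density_def sq field_simps)
qed

context fixes s :: real assumes s: "0 < s"
begin

lemma mom_even: "has_bochner_integral lborel (\<lambda>z. normal_density 0 s z * z ^ (2*k)) (fact (2*k) / ((2/s ^ 2)^k * fact k))"
  using normal_moment_even[OF s, of 0 k] by simp

lemma mom_even': "n = 2*k \<Longrightarrow> v = fact (2*k) / ((2/s ^ 2) ^ k * fact k) \<Longrightarrow> has_bochner_integral lborel (\<lambda>z. normal_density 0 s z * z ^ n) v"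
  using mom_even by simp

lemma mom2: "has_bochner_integral lborel (\<lambda>z. normal_density 0 s z * z ^ 2) (s ^ 2)"
  by (rule mom_even'[of _ 1]) (use s in \<open>simp_all add: field_simps\<close>)
lemma mom4: "has_bochner_integral lborel (\<lambda>z. normal_density 0 s z * z ^ 4) (3 * s ^ 4)"
  by (rule mom_even'[of _ 2]) (use s in \<open>simp_all add: field_simps eval_nat_numeral fact_numeral\<close>)
lemma mom6: "has_bochner_integral lborel (\<lambda>z. normal_density 0 s z * z ^ 6) (15 * s ^ 6)"
  by (rule mom_even'[of _ 3]) (use s in \<open>simp_all add: field_simps eval_nat_numeral fact_numeral\<close>)
lemma mom8: "has_bochner_integral lborel (\<lambda>z. normal_density 0 s z * z ^ 8) (105 * s ^ 8)"
  by (rule mom_even'[of _ 4]) (use s in \<open>simp_all add: field_simps eval_nat_numeral fact_numeral\<close>)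

lemma mom_abs1: "has_bochner_integral lborel (\<lambda>z. normal_density 0 s z * \<bar>z\<bar>) (s * sqrt (2/pi))"
  using normal_moment_abs_odd[OF s, of 0 0] by simp
lemma mom_abs3: "has_bochner_integral lborel (\<lambda>z. normal_density 0 s z * \<bar>z\<bar> ^ 3) (2 * s ^ 3 * sqrt (2/pi))"
  using normal_moment_abs_odd[OF s, of 0 1] by simp

end

definition wgt :: "real \<Rightarrow> real \<Rightarrow> real" where
  "wgt b z = exp (-(b * z ^ 2)) * (1 + b * z ^ 2)"

definition maj :: "real \<Rightarrow> real \<Rightarrow> real \<Rightarrow> real" where
  "maj a b z = wgt b z * (z ^ 2 - a ^ 2 * z ^ 4 / 3 + 2 * a ^ 4 * z ^ 6 / 15) + (1 - wgt b z) * \<bar>z\<bar> / a"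

lemma tanh_abs_mult: fixes a z :: real shows "z * tanh (a * z) = \<bar>z\<bar> * tanh (a * \<bar>z\<bar>)"
  by (cases "z \<ge> 0") (auto simp: abs_if)

lemma distr_aux: fixes u W X :: real shows "u * (W * X + (1 - W)) = W * (u * X) + (1 - W) * u"
  by algebra

lemma maj_bound:
  fixes a b z :: real assumes a: "0 < a" and b: "0 \<le> b"
  shows "z * tanh (a * z) / a \<le> maj a b z"
proof -
  let ?y = "a * \<bar>z\<bar>" let ?W = "wgt b z"
  have y: "0 \<le> ?y" using a by simp
  have W: "0 \<le> ?W" "?W \<le> 1" using weight_bounds[OF b, of z] by (auto simp: wgt_def)
  have t1: "tanh ?y \<le> ?y - ?y ^ 3 / 3 + 2 * ?y ^ 5 / 15" by (rule tanh_le_T5[OF y])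
  have t2: "tanh ?y \<le> 1" using tanh_real_lt_1[of ?y] by simp
  have "tanh ?y = ?W * tanh ?y + (1 - ?W) * tanh ?y" by (simp add: algebra_simps)
  also have "\<dots> \<le> ?W * (?y - ?y ^ 3 / 3 + 2 * ?y ^ 5 / 15) + (1 - ?W) * 1"
    using W t1 t2 by (intro add_mono mult_left_mono) auto
  finally have tb: "tanh ?y \<le> ?W * (?y - ?y ^ 3 / 3 + 2 * ?y ^ 5 / 15) + (1 - ?W)" by simp
  have "z * tanh (a * z) / a = \<bar>z\<bar> * tanh (a * \<bar>z\<bar>) / a" by (simp only: tanh_abs_mult[of z a])
  also have "\<dots> = (\<bar>z\<bar> / a) * tanh ?y" by simp
  also have "\<dots> \<le> (\<bar>z\<bar> / a) * (?W * (?y - ?y ^ 3 / 3 + 2 * ?y ^ 5 / 15) + (1 - ?W))"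
    using tb a by (intro mult_left_mono) auto
  also have "\<dots> = ?W * ((\<bar>z\<bar> / a) * (?y - ?y ^ 3 / 3 + 2 * ?y ^ 5 / 15)) + (1 - ?W) * \<bar>z\<bar> / a"
    using distr_aux[of "\<bar>z\<bar> / a" ?W "?y - ?y ^ 3 / 3 + 2 * ?y ^ 5 / 15"] by simp
  also have "(\<bar>z\<bar> / a) * (?y - ?y ^ 3 / 3 + 2 * ?y ^ 5 / 15) = z ^ 2 - a ^ 2 * z ^ 4 / 3 + 2 * a ^ 4 * z ^ 6 / 15"
  proof -
    have p: "\<bar>z\<bar> ^ 2 = z ^ 2" "\<bar>z\<bar> ^ 4 = z ^ 4" "\<bar>z\<bar> ^ 6 = z ^ 6"
      by (simp_all add: power_even_abs)
    have e: "\<bar>z\<bar> * (?y - ?y ^ 3 / 3 + 2 * ?y ^ 5 / 15) = a * (\<bar>z\<bar> ^ 2 - a ^ 2 * \<bar>z\<bar> ^ 4 / 3 + 2 * a ^ 4 * \<bar>z\<bar> ^ 6 / 15)"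
      by algebra
    have "(\<bar>z\<bar> / a) * (?y - ?y ^ 3 / 3 + 2 * ?y ^ 5 / 15) = (\<bar>z\<bar> * (?y - ?y ^ 3 / 3 + 2 * ?y ^ 5 / 15)) / a"
      by simp
    also have "\<dots> = \<bar>z\<bar> ^ 2 - a ^ 2 * \<bar>z\<bar> ^ 4 / 3 + 2 * a ^ 4 * \<bar>z\<bar> ^ 6 / 15"
      unfolding e using a by simp
    finally show ?thesis unfolding p .
  qed
  finally show ?thesis unfolding maj_def by simp
qed

lemma meas_cont: fixes f :: "real \<Rightarrow> real" shows "continuous_on UNIV f \<Longrightarrow> f \<in> borel_measurable lborel"
  by (simp add: borel_measurable_continuous_onI)

lemma integrable_std_abs: "integrable lborel (\<lambda>z. std_normal_density z * \<bar>z\<bar>)"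
  using integrable_std_normal_moment_abs[of 1] by simp

lemma integrable_tanh_term:
  fixes a :: real assumes a: "0 < a"
  shows "integrable lborel (\<lambda>z. std_normal_density z * (z * tanh (a * z) / a))"
proof (rule Bochner_Integration.integrable_bound[OF integrable_divide[OF integrable_std_abs, of a]])
  show "(\<lambda>z. std_normal_density z * (z * tanh (a * z) / a)) \<in> borel_measurable lborel"
    using a by (intro meas_cont) (auto intro!: continuous_intros simp: std_normal_density_def)
  show "AE z in lborel. norm (std_normal_density z * (z * tanh (a * z) / a)) \<le> norm (std_normal_density z * \<bar>z\<bar> / a)"
  proof (rule AE_I2)
    fix z :: real
    have "\<bar>tanh (a * z)\<bar> \<le> 1" using tanh_real_bounds[of "a*z"] by auto
    then have "\<bar>z\<bar> * \<bar>tanh (a * z)\<bar> \<le> \<bar>z\<bar>" using mult_left_mono[of _ 1 "\<bar>z\<bar>"] by simp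
    then show "norm (std_normal_density z * (z * tanh (a * z) / a)) \<le> norm (std_normal_density z * \<bar>z\<bar> / a)"
      using a by (simp add: abs_mult divide_right_mono mult_left_mono)
  qed
qed

lemma helperA: fixes S E B P Z ia :: real
  shows "S * (E * (1 + B) * P + (1 - E * (1 + B)) * Z * ia) = S * Z * ia + (S * E) * ((1 + B) * P - (1 + B) * Z * ia)"
  by algebra

lemma helperB: fixes a b z w ia :: real
  shows "(1 + b * z ^ 2) * (z ^ 2 - a ^ 2 * z ^ 4 / 3 + 2 * a ^ 4 * z ^ 6 / 15) - (1 + b * z ^ 2) * w * ia
   = z ^ 2 + (b - a ^ 2 / 3) * z ^ 4 + (2 * a ^ 4 / 15 - a ^ 2 * b / 3) * z ^ 6 + (2 * a ^ 4 * b / 15) * z ^ 8 - (w + b * (w * z ^ 2)) * ia"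
  by algebra

lemma helperC: fixes n s K4 K6 K8 z2 z4 z6 z8 w w3 ia :: real
  shows "s * n * (z2 + K4 * z4 + K6 * z6 + K8 * z8 - (w + b * w3) * ia)
   = s * (n * z2 + K4 * (n * z4) + K6 * (n * z6) + K8 * (n * z8) - (n * w + b * (n * w3)) * ia)"
  by algebra

lemma maj_pointwise:
  fixes a s z :: real assumes s: "0 < s"
  defines "b \<equiv> (1/s ^ 2 - 1)/2"
  shows "std_normal_density z * maj a b z = std_normal_density z * \<bar>z\<bar> * (1/a) +
     s * (normal_density 0 s z * z ^ 2 + (b - a ^ 2 / 3) * (normal_density 0 s z * z ^ 4)
       + (2 * a ^ 4 / 15 - a ^ 2 * b / 3) * (normal_density 0 s z * z ^ 6)
       + (2 * a ^ 4 * b / 15) * (normal_density 0 s z * z ^ 8)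
       - (normal_density 0 s z * \<bar>z\<bar> + b * (normal_density 0 s z * \<bar>z\<bar> ^ 3)) * (1/a))"
proof -
  let ?S = "std_normal_density z" let ?E = "exp (-(b * z ^ 2))" let ?n = "normal_density 0 s z"
  have SE: "?S * ?E = s * ?n" using nd_weight[OF s, of z] by (simp add: b_def)
  have z3: "\<bar>z\<bar> ^ 3 = \<bar>z\<bar> * z ^ 2" by (simp add: power2_eq_square power3_eq_cube)
  have "?S * maj a b z = ?S * (?E * (1 + b * z ^ 2) * (z ^ 2 - a ^ 2 * z ^ 4 / 3 + 2 * a ^ 4 * z ^ 6 / 15)
        + (1 - ?E * (1 + b * z ^ 2)) * \<bar>z\<bar> * (1/a))"
    by (simp add: maj_def wgt_def)
  also have "\<dots> = ?S * \<bar>z\<bar> * (1/a) + (?S * ?E) * ((1 + b * z ^ 2) * (z ^ 2 - a ^ 2 * z ^ 4 / 3 + 2 * a ^ 4 * z ^ 6 / 15) - (1 + b * z ^ 2) * \<bar>z\<bar> * (1/a))"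
    by (rule helperA)
  also have "\<dots> = ?S * \<bar>z\<bar> * (1/a) + s * ?n * (z ^ 2 + (b - a ^ 2 / 3) * z ^ 4 + (2 * a ^ 4 / 15 - a ^ 2 * b / 3) * z ^ 6 + (2 * a ^ 4 * b / 15) * z ^ 8 - (\<bar>z\<bar> + b * \<bar>z\<bar> ^ 3) * (1/a))"
    unfolding SE helperB z3 ..
  also have "\<dots> = ?S * \<bar>z\<bar> * (1/a) + s * (?n * z ^ 2 + (b - a ^ 2 / 3) * (?n * z ^ 4)
       + (2 * a ^ 4 / 15 - a ^ 2 * b / 3) * (?n * z ^ 6)
       + (2 * a ^ 4 * b / 15) * (?n * z ^ 8)
       - (?n * \<bar>z\<bar> + b * (?n * \<bar>z\<bar> ^ 3)) * (1/a))"
    unfolding helperC ..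
  finally show ?thesis .
qed

lemma maj_integral:
  fixes a s :: real assumes s: "0 < s"
  defines "b \<equiv> (1/s ^ 2 - 1)/2" and "c \<equiv> sqrt (2/pi)"
  shows "has_bochner_integral lborel (\<lambda>z. std_normal_density z * maj a b z)
    (c * (1/a) + s * (s ^ 2 + (b - a ^ 2 / 3) * (3 * s ^ 4) + (2 * a ^ 4 / 15 - a ^ 2 * b / 3) * (15 * s ^ 6)
       + (2 * a ^ 4 * b / 15) * (105 * s ^ 8) - (s * c + b * (2 * s ^ 3 * c)) * (1/a)))"
proof -
  have one: "(0::real) < 1" by simp
  have h0: "has_bochner_integral lborel (\<lambda>z. std_normal_density z * \<bar>z\<bar>) c"
    using mom_abs1[OF one] by (simp add: c_def)
  note m = mom2[OF s] mom4[OF s] mom6[OF s] mom8[OF s] mom_abs1[OF s] mom_abs3[OF s]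
  have "has_bochner_integral lborel (\<lambda>z. std_normal_density z * \<bar>z\<bar> * (1/a) +
     s * (normal_density 0 s z * z ^ 2 + (b - a ^ 2 / 3) * (normal_density 0 s z * z ^ 4)
       + (2 * a ^ 4 / 15 - a ^ 2 * b / 3) * (normal_density 0 s z * z ^ 6)
       + (2 * a ^ 4 * b / 15) * (normal_density 0 s z * z ^ 8)
       - (normal_density 0 s z * \<bar>z\<bar> + b * (normal_density 0 s z * \<bar>z\<bar> ^ 3)) * (1/a)))
    (c * (1/a) + s * (s ^ 2 + (b - a ^ 2 / 3) * (3 * s ^ 4) + (2 * a ^ 4 / 15 - a ^ 2 * b / 3) * (15 * s ^ 6)
       + (2 * a ^ 4 * b / 15) * (105 * s ^ 8) - (s * sqrt (2/pi) + b * (2 * s ^ 3 * sqrt (2/pi))) * (1/a)))"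
    by (intro has_bochner_integral_add has_bochner_integral_diff has_bochner_integral_mult_left
          has_bochner_integral_mult_right h0 m)
  then show ?thesis
    by (subst has_bochner_integral_cong[OF refl maj_pointwise[OF s, folded b_def] refl]) (simp add: c_def)
qed

lemma Q_to_V: fixes a A0 A2 A4 K P :: real assumes a: "0 < a"
  and q: "0 \<le> a * (2 + (1 - P) * a ^ 2) - ((A0 + A2 * a ^ 2 + A4 * a ^ 4) * a * (2 + a ^ 2) + K * (2 + a ^ 2))"
  shows "A0 + A2 * a ^ 2 + A4 * a ^ 4 + K / a \<le> 1 - P * a ^ 2 / (2 + a ^ 2)"
proof -
  define A where "A = A0 + A2 * a ^ 2 + A4 * a ^ 4"
  have d2: "0 < 2 + a ^ 2" by (simp add: add_pos_nonneg)
  have d: "0 < a * (2 + a ^ 2)" using a d2 by simp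
  have q': "K * (2 + a ^ 2) \<le> a * (2 + (1 - P) * a ^ 2) - A * a * (2 + a ^ 2)" using q unfolding A_def by simp
  have "K / a = K * (2 + a ^ 2) / (a * (2 + a ^ 2))" using a d2 by simp
  also have "\<dots> \<le> (a * (2 + (1 - P) * a ^ 2) - A * a * (2 + a ^ 2)) / (a * (2 + a ^ 2))"
    using q' d by (intro divide_right_mono) auto
  also have "\<dots> = (2 + (1 - P) * a ^ 2) / (2 + a ^ 2) - A"
    using a d2 by (simp add: diff_divide_distrib)
  also have "(2 + (1 - P) * a ^ 2) / (2 + a ^ 2) = 1 - P * a ^ 2 / (2 + a ^ 2)"
    using d2 by (simp add: field_simps)
  finally show ?thesis unfolding A_def by simp
qed

lemma piece0: fixes a :: real assumes al: "(11/20) \<le> a" and au: "a \<le> (93/160)"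
  shows "0 \<le> (- (390971/1280000)) + (617/1024) * a + (- (390971/2560000)) * a ^ 2 + (4644689/10240000) * a ^ 3 + (- (112023/131072)) * a ^ 5 + (- (177147/262144)) * a ^ 7"
proof -
  define h where "h = a - (11/20)"
  have ah: "a = (11/20) + h" unfolding h_def by simp
  have h0: "0 \<le> h" "h \<le> (1/32)" using al au unfolding h_def by simp_all
  have p2: "0 \<le> h ^ 2" "h ^ 2 \<le> (1/1024)" using power_mono[OF h0(2) h0(1), of 2] h0 by (simp_all add: power_numeral_reduce)
  have p3: "0 \<le> h ^ 3" "h ^ 3 \<le> (1/32768)" using power_mono[OF h0(2) h0(1), of 3] h0 by (simp_all add: power_numeral_reduce)
  have p4: "0 \<le> h ^ 4" "h ^ 4 \<le> (1/1048576)" using power_mono[OF h0(2) h0(1), of 4] h0 by (simp_all add: power_numeral_reduce)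
  have p5: "0 \<le> h ^ 5" "h ^ 5 \<le> (1/33554432)" using power_mono[OF h0(2) h0(1), of 5] h0 by (simp_all add: power_numeral_reduce)
  have p6: "0 \<le> h ^ 6" "h ^ 6 \<le> (1/1073741824)" using power_mono[OF h0(2) h0(1), of 6] h0 by (simp_all add: power_numeral_reduce)
  have p7: "0 \<le> h ^ 7" "h ^ 7 \<le> (1/34359738368)" using power_mono[OF h0(2) h0(1), of 7] h0 by (simp_all add: power_numeral_reduce)
  have e: "(- (390971/1280000)) + (617/1024) * a + (- (390971/2560000)) * a ^ 2 + (4644689/10240000) * a ^ 3 + (- (112023/131072)) * a ^ 5 + (- (177147/262144)) * a ^ 7 = (642364723247/335544320000000) + (5439078262843/16777216000000) * h + (- (258448937993/167772160000)) * h ^ 2 + (- (180189940801/41943040000)) * h ^ 3 + (- (2636280999/419430400)) * h ^ 4 + (- (539748927/104857600)) * h ^ 5 + (- (13640319/5242880)) * h ^ 6 + (- (177147/262144)) * h ^ 7" unfolding ah by algebra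
  have "0 \<le> (642364723247/335544320000000) + (5439078262843/16777216000000) * h + (- (258448937993/167772160000)) * h ^ 2 + (- (180189940801/41943040000)) * h ^ 3 + (- (2636280999/419430400)) * h ^ 4 + (- (539748927/104857600)) * h ^ 5 + (- (13640319/5242880)) * h ^ 6 + (- (177147/262144)) * h ^ 7" using h0 p2 p3 p4 p5 p6 p7 by linarith
  then show ?thesis unfolding e .
qed

lemma piece0_V: fixes a :: real assumes "(11/20) \<le> a" "a \<le> (93/160)"
  shows "(1431/2048) + (- (16281/32768)) * a ^ 2 + (177147/262144) * a ^ 4 + (390971/2560000) / a \<le> 1 - (4207/5000) * a ^ 2 / (2 + a ^ 2)"
proof -
  have e: "(- (390971/1280000)) + (617/1024) * a + (- (390971/2560000)) * a ^ 2 + (4644689/10240000) * a ^ 3 + (- (112023/131072)) * a ^ 5 + (- (177147/262144)) * a ^ 7 = a * (2 + (1 - (4207/5000)) * a ^ 2) - (((1431/2048) + (- (16281/32768)) * a ^ 2 + (177147/262144) * a ^ 4) * a * (2 + a ^ 2) + (390971/2560000) * (2 + a ^ 2))" by algebra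
  have "0 < a" using assms by simp
  then show ?thesis by (rule Q_to_V) (use piece0[OF assms] e in simp)
qed

lemma piece1: fixes a :: real assumes al: "(93/160) \<le> a" and au: "a \<le> (103/160)"
  shows "0 \<le> (- (390971/1280000)) + (617/1024) * a + (- (390971/2560000)) * a ^ 2 + (4644689/10240000) * a ^ 3 + (- (112023/131072)) * a ^ 5 + (- (177147/262144)) * a ^ 7"
proof -
  define h where "h = a - (93/160)"
  have ah: "a = (93/160) + h" unfolding h_def by simp
  have h0: "0 \<le> h" "h \<le> (1/16)" using al au unfolding h_def by simp_all
  have p2: "0 \<le> h ^ 2" "h ^ 2 \<le> (1/256)" using power_mono[OF h0(2) h0(1), of 2] h0 by (simp_all add: power_numeral_reduce)
  have p3: "0 \<le> h ^ 3" "h ^ 3 \<le> (1/4096)" using power_mono[OF h0(2) h0(1), of 3] h0 by (simp_all add: power_numeral_reduce)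
  have p4: "0 \<le> h ^ 4" "h ^ 4 \<le> (1/65536)" using power_mono[OF h0(2) h0(1), of 4] h0 by (simp_all add: power_numeral_reduce)
  have p5: "0 \<le> h ^ 5" "h ^ 5 \<le> (1/1048576)" using power_mono[OF h0(2) h0(1), of 5] h0 by (simp_all add: power_numeral_reduce)
  have p6: "0 \<le> h ^ 6" "h ^ 6 \<le> (1/16777216)" using power_mono[OF h0(2) h0(1), of 6] h0 by (simp_all add: power_numeral_reduce)
  have p7: "0 \<le> h ^ 7" "h ^ 7 \<le> (1/268435456)" using power_mono[OF h0(2) h0(1), of 7] h0 by (simp_all add: power_numeral_reduce)
  have e: "(- (390971/1280000)) + (617/1024) * a + (- (390971/2560000)) * a ^ 2 + (4644689/10240000) * a ^ 3 + (- (112023/131072)) * a ^ 5 + (- (177147/262144)) * a ^ 7 = (7321053306787745129/703687441776640000000) + (943540187425493867/4398046511104000000) * h + (- (10894338086111887/5497558138880000)) * h ^ 2 + (- (881948248972321/171798691840000)) * h ^ 3 + (- (1530834723153/214748364800)) * h ^ 4 + (- (37910610063/6710886400)) * h ^ 5 + (- (115322697/41943040)) * h ^ 6 + (- (177147/262144)) * h ^ 7" unfolding ah by algebra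
  have "0 \<le> (7321053306787745129/703687441776640000000) + (943540187425493867/4398046511104000000) * h + (- (10894338086111887/5497558138880000)) * h ^ 2 + (- (881948248972321/171798691840000)) * h ^ 3 + (- (1530834723153/214748364800)) * h ^ 4 + (- (37910610063/6710886400)) * h ^ 5 + (- (115322697/41943040)) * h ^ 6 + (- (177147/262144)) * h ^ 7" using h0 p2 p3 p4 p5 p6 p7 by linarith
  then show ?thesis unfolding e .
qed

lemma piece1_V: fixes a :: real assumes "(93/160) \<le> a" "a \<le> (103/160)"
  shows "(1431/2048) + (- (16281/32768)) * a ^ 2 + (177147/262144) * a ^ 4 + (390971/2560000) / a \<le> 1 - (4207/5000) * a ^ 2 / (2 + a ^ 2)"
proof -
  have e: "(- (390971/1280000)) + (617/1024) * a + (- (390971/2560000)) * a ^ 2 + (4644689/10240000) * a ^ 3 + (- (112023/131072)) * a ^ 5 + (- (177147/262144)) * a ^ 7 = a * (2 + (1 - (4207/5000)) * a ^ 2) - (((1431/2048) + (- (16281/32768)) * a ^ 2 + (177147/262144) * a ^ 4) * a * (2 + a ^ 2) + (390971/2560000) * (2 + a ^ 2))" by algebra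
  have "0 < a" using assms by simp
  then show ?thesis by (rule Q_to_V) (use piece1[OF assms] e in simp)
qed

lemma piece2: fixes a :: real assumes al: "(103/160) \<le> a" and au: "a \<le> (17/25)"
  shows "0 \<le> (- (390971/1280000)) + (617/1024) * a + (- (390971/2560000)) * a ^ 2 + (4644689/10240000) * a ^ 3 + (- (112023/131072)) * a ^ 5 + (- (177147/262144)) * a ^ 7"
proof -
  define h where "h = a - (103/160)"
  have ah: "a = (103/160) + h" unfolding h_def by simp
  have h0: "0 \<le> h" "h \<le> (29/800)" using al au unfolding h_def by simp_all
  have p2: "0 \<le> h ^ 2" "h ^ 2 \<le> (841/640000)" using power_mono[OF h0(2) h0(1), of 2] h0 by (simp_all add: power_numeral_reduce)
  have p3: "0 \<le> h ^ 3" "h ^ 3 \<le> (24389/512000000)" using power_mono[OF h0(2) h0(1), of 3] h0 by (simp_all add: power_numeral_reduce)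
  have p4: "0 \<le> h ^ 4" "h ^ 4 \<le> (707281/409600000000)" using power_mono[OF h0(2) h0(1), of 4] h0 by (simp_all add: power_numeral_reduce)
  have p5: "0 \<le> h ^ 5" "h ^ 5 \<le> (20511149/327680000000000)" using power_mono[OF h0(2) h0(1), of 5] h0 by (simp_all add: power_numeral_reduce)
  have p6: "0 \<le> h ^ 6" "h ^ 6 \<le> (594823321/262144000000000000)" using power_mono[OF h0(2) h0(1), of 6] h0 by (simp_all add: power_numeral_reduce)
  have p7: "0 \<le> h ^ 7" "h ^ 7 \<le> (17249876309/209715200000000000000)" using power_mono[OF h0(2) h0(1), of 7] h0 by (simp_all add: power_numeral_reduce)
  have e: "(- (390971/1280000)) + (617/1024) * a + (- (390971/2560000)) * a ^ 2 + (4644689/10240000) * a ^ 3 + (- (112023/131072)) * a ^ 5 + (- (177147/262144)) * a ^ 7 = (10346887997683469299/703687441776640000000) + (- (443060754490801133/4398046511104000000)) * h + (- (17183883716613613/5497558138880000)) * h ^ 2 + (- (1228394259055921/171798691840000)) * h ^ 3 + (- (1945777661883/214748364800)) * h ^ 4 + (- (45201980583/6710886400)) * h ^ 5 + (- (127722987/41943040)) * h ^ 6 + (- (177147/262144)) * h ^ 7" unfolding ah by algebra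
  have "0 \<le> (10346887997683469299/703687441776640000000) + (- (443060754490801133/4398046511104000000)) * h + (- (17183883716613613/5497558138880000)) * h ^ 2 + (- (1228394259055921/171798691840000)) * h ^ 3 + (- (1945777661883/214748364800)) * h ^ 4 + (- (45201980583/6710886400)) * h ^ 5 + (- (127722987/41943040)) * h ^ 6 + (- (177147/262144)) * h ^ 7" using h0 p2 p3 p4 p5 p6 p7 by linarith
  then show ?thesis unfolding e .
qed

lemma piece2_V: fixes a :: real assumes "(103/160) \<le> a" "a \<le> (17/25)"
  shows "(1431/2048) + (- (16281/32768)) * a ^ 2 + (177147/262144) * a ^ 4 + (390971/2560000) / a \<le> 1 - (4207/5000) * a ^ 2 / (2 + a ^ 2)"
proof -
  have e: "(- (390971/1280000)) + (617/1024) * a + (- (390971/2560000)) * a ^ 2 + (4644689/10240000) * a ^ 3 + (- (112023/131072)) * a ^ 5 + (- (177147/262144)) * a ^ 7 = a * (2 + (1 - (4207/5000)) * a ^ 2) - (((1431/2048) + (- (16281/32768)) * a ^ 2 + (177147/262144) * a ^ 4) * a * (2 + a ^ 2) + (390971/2560000) * (2 + a ^ 2))" by algebra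
  have "0 < a" using assms by simp
  then show ?thesis by (rule Q_to_V) (use piece2[OF assms] e in simp)
qed

lemma piece3: fixes a :: real assumes al: "(17/25) \<le> a" and au: "a \<le> (3/4)"
  shows "0 \<le> (- (20753379/50000000)) + (78921/100000) * a + (- (20753379/100000000)) * a ^ 2 + (635847/2000000) * a ^ 3 + (- (133766913/250000000)) * a ^ 5 + (- (458713451/1000000000)) * a ^ 7"
proof -
  define h where "h = a - (17/25)"
  have ah: "a = (17/25) + h" unfolding h_def by simp
  have h0: "0 \<le> h" "h \<le> (7/100)" using al au unfolding h_def by simp_all
  have p2: "0 \<le> h ^ 2" "h ^ 2 \<le> (49/10000)" using power_mono[OF h0(2) h0(1), of 2] h0 by (simp_all add: power_numeral_reduce)
  have p3: "0 \<le> h ^ 3" "h ^ 3 \<le> (343/1000000)" using power_mono[OF h0(2) h0(1), of 3] h0 by (simp_all add: power_numeral_reduce)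
  have p4: "0 \<le> h ^ 4" "h ^ 4 \<le> (2401/100000000)" using power_mono[OF h0(2) h0(1), of 4] h0 by (simp_all add: power_numeral_reduce)
  have p5: "0 \<le> h ^ 5" "h ^ 5 \<le> (16807/10000000000)" using power_mono[OF h0(2) h0(1), of 5] h0 by (simp_all add: power_numeral_reduce)
  have p6: "0 \<le> h ^ 6" "h ^ 6 \<le> (117649/1000000000000)" using power_mono[OF h0(2) h0(1), of 6] h0 by (simp_all add: power_numeral_reduce)
  have p7: "0 \<le> h ^ 7" "h ^ 7 \<le> (823543/100000000000000)" using power_mono[OF h0(2) h0(1), of 7] h0 by (simp_all add: power_numeral_reduce)
  have e: "(- (20753379/50000000)) + (78921/100000) * a + (- (20753379/100000000)) * a ^ 2 + (635847/2000000) * a ^ 3 + (- (133766913/250000000)) * a ^ 5 + (- (458713451/1000000000)) * a ^ 7 = (103530159895338227/6103515625000000000) + (14282344515278167/244140625000000000) * h + (- (25800443622957897/9765625000000000)) * h ^ 2 + (- (436640858834297/78125000000000)) * h ^ 3 + (- (21460708095841/3125000000000)) * h ^ 4 + (- (3118349216619/625000000000)) * h ^ 5 + (- (54586900669/25000000000)) * h ^ 6 + (- (458713451/1000000000)) * h ^ 7" unfolding ah by algebra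
  have "0 \<le> (103530159895338227/6103515625000000000) + (14282344515278167/244140625000000000) * h + (- (25800443622957897/9765625000000000)) * h ^ 2 + (- (436640858834297/78125000000000)) * h ^ 3 + (- (21460708095841/3125000000000)) * h ^ 4 + (- (3118349216619/625000000000)) * h ^ 5 + (- (54586900669/25000000000)) * h ^ 6 + (- (458713451/1000000000)) * h ^ 7" using h0 p2 p3 p4 p5 p6 p7 by linarith
  then show ?thesis unfolding e .
qed

lemma piece3_V: fixes a :: real assumes "(17/25) \<le> a" "a \<le> (3/4)"
  shows "(121079/200000) + (- (1529437/4000000)) * a ^ 2 + (458713451/1000000000) * a ^ 4 + (20753379/100000000) / a \<le> 1 - (4207/5000) * a ^ 2 / (2 + a ^ 2)"
proof -
  have e: "(- (20753379/50000000)) + (78921/100000) * a + (- (20753379/100000000)) * a ^ 2 + (635847/2000000) * a ^ 3 + (- (133766913/250000000)) * a ^ 5 + (- (458713451/1000000000)) * a ^ 7 = a * (2 + (1 - (4207/5000)) * a ^ 2) - (((121079/200000) + (- (1529437/4000000)) * a ^ 2 + (458713451/1000000000) * a ^ 4) * a * (2 + a ^ 2) + (20753379/100000000) * (2 + a ^ 2))" by algebra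
  have "0 < a" using assms by simp
  then show ?thesis by (rule Q_to_V) (use piece3[OF assms] e in simp)
qed

lemma piece4: fixes a :: real assumes al: "(3/4) \<le> a" and au: "a \<le> (13/16)"
  shows "0 \<le> (- (255328/390625)) + (3604/3125) * a + (- (127664/390625)) * a ^ 2 + (17449/125000) * a ^ 3 + (- (313713/1953125)) * a ^ 5 + (- (354294/1953125)) * a ^ 7"
proof -
  define h where "h = a - (3/4)"
  have ah: "a = (3/4) + h" unfolding h_def by simp
  have h0: "0 \<le> h" "h \<le> (1/16)" using al au unfolding h_def by simp_all
  have p2: "0 \<le> h ^ 2" "h ^ 2 \<le> (1/256)" using power_mono[OF h0(2) h0(1), of 2] h0 by (simp_all add: power_numeral_reduce)
  have p3: "0 \<le> h ^ 3" "h ^ 3 \<le> (1/4096)" using power_mono[OF h0(2) h0(1), of 3] h0 by (simp_all add: power_numeral_reduce)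
  have p4: "0 \<le> h ^ 4" "h ^ 4 \<le> (1/65536)" using power_mono[OF h0(2) h0(1), of 4] h0 by (simp_all add: power_numeral_reduce)
  have p5: "0 \<le> h ^ 5" "h ^ 5 \<le> (1/1048576)" using power_mono[OF h0(2) h0(1), of 5] h0 by (simp_all add: power_numeral_reduce)
  have p6: "0 \<le> h ^ 6" "h ^ 6 \<le> (1/16777216)" using power_mono[OF h0(2) h0(1), of 6] h0 by (simp_all add: power_numeral_reduce)
  have p7: "0 \<le> h ^ 7" "h ^ 7 \<le> (1/268435456)" using power_mono[OF h0(2) h0(1), of 7] h0 by (simp_all add: power_numeral_reduce)
  have e: "(- (255328/390625)) + (3604/3125) * a + (- (127664/390625)) * a ^ 2 + (17449/125000) * a ^ 3 + (- (313713/1953125)) * a ^ 5 + (- (354294/1953125)) * a ^ 7 = (384713999/16000000000) + (1674035699/4000000000) * h + (- (1594339061/1000000000)) * h ^ 2 + (- (138637421/50000000)) * h ^ 3 + (- (8201979/2500000)) * h ^ 4 + (- (35990487/15625000)) * h ^ 5 + (- (3720087/3906250)) * h ^ 6 + (- (354294/1953125)) * h ^ 7" unfolding ah by algebra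
  have "0 \<le> (384713999/16000000000) + (1674035699/4000000000) * h + (- (1594339061/1000000000)) * h ^ 2 + (- (138637421/50000000)) * h ^ 3 + (- (8201979/2500000)) * h ^ 4 + (- (35990487/15625000)) * h ^ 5 + (- (3720087/3906250)) * h ^ 6 + (- (354294/1953125)) * h ^ 7" using h0 p2 p3 p4 p5 p6 p7 by linarith
  then show ?thesis unfolding e .
qed

lemma piece4_V: fixes a :: real assumes "(3/4) \<le> a" "a \<le> (13/16)"
  shows "(1323/3125) + (- (3159/15625)) * a ^ 2 + (354294/1953125) * a ^ 4 + (127664/390625) / a \<le> 1 - (4207/5000) * a ^ 2 / (2 + a ^ 2)"
proof -
  have e: "(- (255328/390625)) + (3604/3125) * a + (- (127664/390625)) * a ^ 2 + (17449/125000) * a ^ 3 + (- (313713/1953125)) * a ^ 5 + (- (354294/1953125)) * a ^ 7 = a * (2 + (1 - (4207/5000)) * a ^ 2) - (((1323/3125) + (- (3159/15625)) * a ^ 2 + (354294/1953125) * a ^ 4) * a * (2 + a ^ 2) + (127664/390625) * (2 + a ^ 2))" by algebra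
  have "0 < a" using assms by simp
  then show ?thesis by (rule Q_to_V) (use piece4[OF assms] e in simp)
qed

lemma piece5: fixes a :: real assumes al: "(13/16) \<le> a" and au: "a \<le> (15/16)"
  shows "0 \<le> (- (255328/390625)) + (3604/3125) * a + (- (127664/390625)) * a ^ 2 + (17449/125000) * a ^ 3 + (- (313713/1953125)) * a ^ 5 + (- (354294/1953125)) * a ^ 7"
proof -
  define h where "h = a - (13/16)"
  have ah: "a = (13/16) + h" unfolding h_def by simp
  have h0: "0 \<le> h" "h \<le> (1/8)" using al au unfolding h_def by simp_all
  have p2: "0 \<le> h ^ 2" "h ^ 2 \<le> (1/64)" using power_mono[OF h0(2) h0(1), of 2] h0 by (simp_all add: power_numeral_reduce)
  have p3: "0 \<le> h ^ 3" "h ^ 3 \<le> (1/512)" using power_mono[OF h0(2) h0(1), of 3] h0 by (simp_all add: power_numeral_reduce)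
  have p4: "0 \<le> h ^ 4" "h ^ 4 \<le> (1/4096)" using power_mono[OF h0(2) h0(1), of 4] h0 by (simp_all add: power_numeral_reduce)
  have p5: "0 \<le> h ^ 5" "h ^ 5 \<le> (1/32768)" using power_mono[OF h0(2) h0(1), of 5] h0 by (simp_all add: power_numeral_reduce)
  have p6: "0 \<le> h ^ 6" "h ^ 6 \<le> (1/262144)" using power_mono[OF h0(2) h0(1), of 6] h0 by (simp_all add: power_numeral_reduce)
  have p7: "0 \<le> h ^ 7" "h ^ 7 \<le> (1/2097152)" using power_mono[OF h0(2) h0(1), of 7] h0 by (simp_all add: power_numeral_reduce)
  have e: "(- (255328/390625)) + (3604/3125) * a + (- (127664/390625)) * a ^ 2 + (17449/125000) * a ^ 3 + (- (313713/1953125)) * a ^ 5 + (- (354294/1953125)) * a ^ 7 = (11336231213689/262144000000000) + (3003813702859/16384000000000) * h + (- (2249695296731/1024000000000)) * h ^ 2 + (- (47202169901/12800000000)) * h ^ 3 + (- (649272429/160000000)) * h ^ 4 + (- (668849967/250000000)) * h ^ 5 + (- (16120377/15625000)) * h ^ 6 + (- (354294/1953125)) * h ^ 7" unfolding ah by algebra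
  have "0 \<le> (11336231213689/262144000000000) + (3003813702859/16384000000000) * h + (- (2249695296731/1024000000000)) * h ^ 2 + (- (47202169901/12800000000)) * h ^ 3 + (- (649272429/160000000)) * h ^ 4 + (- (668849967/250000000)) * h ^ 5 + (- (16120377/15625000)) * h ^ 6 + (- (354294/1953125)) * h ^ 7" using h0 p2 p3 p4 p5 p6 p7 by linarith
  then show ?thesis unfolding e .
qed

lemma piece5_V: fixes a :: real assumes "(13/16) \<le> a" "a \<le> (15/16)"
  shows "(1323/3125) + (- (3159/15625)) * a ^ 2 + (354294/1953125) * a ^ 4 + (127664/390625) / a \<le> 1 - (4207/5000) * a ^ 2 / (2 + a ^ 2)"
proof -
  have e: "(- (255328/390625)) + (3604/3125) * a + (- (127664/390625)) * a ^ 2 + (17449/125000) * a ^ 3 + (- (313713/1953125)) * a ^ 5 + (- (354294/1953125)) * a ^ 7 = a * (2 + (1 - (4207/5000)) * a ^ 2) - (((1323/3125) + (- (3159/15625)) * a ^ 2 + (354294/1953125) * a ^ 4) * a * (2 + a ^ 2) + (127664/390625) * (2 + a ^ 2))" by algebra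
  have "0 < a" using assms by simp
  then show ?thesis by (rule Q_to_V) (use piece5[OF assms] e in simp)
qed

lemma piece6: fixes a :: real assumes al: "(15/16) \<le> a" and au: "a \<le> (19/20)"
  shows "0 \<le> (- (255328/390625)) + (3604/3125) * a + (- (127664/390625)) * a ^ 2 + (17449/125000) * a ^ 3 + (- (313713/1953125)) * a ^ 5 + (- (354294/1953125)) * a ^ 7"
proof -
  define h where "h = a - (15/16)"
  have ah: "a = (15/16) + h" unfolding h_def by simp
  have h0: "0 \<le> h" "h \<le> (1/80)" using al au unfolding h_def by simp_all
  have p2: "0 \<le> h ^ 2" "h ^ 2 \<le> (1/6400)" using power_mono[OF h0(2) h0(1), of 2] h0 by (simp_all add: power_numeral_reduce)
  have p3: "0 \<le> h ^ 3" "h ^ 3 \<le> (1/512000)" using power_mono[OF h0(2) h0(1), of 3] h0 by (simp_all add: power_numeral_reduce)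
  have p4: "0 \<le> h ^ 4" "h ^ 4 \<le> (1/40960000)" using power_mono[OF h0(2) h0(1), of 4] h0 by (simp_all add: power_numeral_reduce)
  have p5: "0 \<le> h ^ 5" "h ^ 5 \<le> (1/3276800000)" using power_mono[OF h0(2) h0(1), of 5] h0 by (simp_all add: power_numeral_reduce)
  have p6: "0 \<le> h ^ 6" "h ^ 6 \<le> (1/262144000000)" using power_mono[OF h0(2) h0(1), of 6] h0 by (simp_all add: power_numeral_reduce)
  have p7: "0 \<le> h ^ 7" "h ^ 7 \<le> (1/20971520000000)" using power_mono[OF h0(2) h0(1), of 7] h0 by (simp_all add: power_numeral_reduce)
  have e: "(- (255328/390625)) + (3604/3125) * a + (- (127664/390625)) * a ^ 2 + (17449/125000) * a ^ 3 + (- (313713/1953125)) * a ^ 5 + (- (354294/1953125)) * a ^ 7 = (1234964817391/52428800000000) + (- (376127923717/655360000000)) * h + (- (822563956357/204800000000)) * h ^ 2 + (- (3162382373/512000000)) * h ^ 3 + (- (957485367/160000000)) * h ^ 4 + (- (877174839/250000000)) * h ^ 5 + (- (3720087/3125000)) * h ^ 6 + (- (354294/1953125)) * h ^ 7" unfolding ah by algebra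
  have "0 \<le> (1234964817391/52428800000000) + (- (376127923717/655360000000)) * h + (- (822563956357/204800000000)) * h ^ 2 + (- (3162382373/512000000)) * h ^ 3 + (- (957485367/160000000)) * h ^ 4 + (- (877174839/250000000)) * h ^ 5 + (- (3720087/3125000)) * h ^ 6 + (- (354294/1953125)) * h ^ 7" using h0 p2 p3 p4 p5 p6 p7 by linarith
  then show ?thesis unfolding e .
qed

lemma piece6_V: fixes a :: real assumes "(15/16) \<le> a" "a \<le> (19/20)"
  shows "(1323/3125) + (- (3159/15625)) * a ^ 2 + (354294/1953125) * a ^ 4 + (127664/390625) / a \<le> 1 - (4207/5000) * a ^ 2 / (2 + a ^ 2)"
proof -
  have e: "(- (255328/390625)) + (3604/3125) * a + (- (127664/390625)) * a ^ 2 + (17449/125000) * a ^ 3 + (- (313713/1953125)) * a ^ 5 + (- (354294/1953125)) * a ^ 7 = a * (2 + (1 - (4207/5000)) * a ^ 2) - (((1323/3125) + (- (3159/15625)) * a ^ 2 + (354294/1953125) * a ^ 4) * a * (2 + a ^ 2) + (127664/390625) * (2 + a ^ 2))" by algebra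
  have "0 < a" using assms by simp
  then show ?thesis by (rule Q_to_V) (use piece6[OF assms] e in simp)
qed

lemma piece7: fixes a :: real assumes al: "(19/20) \<le> a" and au: "a \<le> (23/20)"
  shows "0 \<le> (- (71811/80000)) + (47/32) * a + (- (71811/160000)) * a ^ 2 + (5813/80000) * a ^ 3 + (- (3/128)) * a ^ 5 + (- (29/512)) * a ^ 7"
proof -
  define h where "h = a - (19/20)"
  have ah: "a = (19/20) + h" unfolding h_def by simp
  have h0: "0 \<le> h" "h \<le> (1/5)" using al au unfolding h_def by simp_all
  have p2: "0 \<le> h ^ 2" "h ^ 2 \<le> (1/25)" using power_mono[OF h0(2) h0(1), of 2] h0 by (simp_all add: power_numeral_reduce)
  have p3: "0 \<le> h ^ 3" "h ^ 3 \<le> (1/125)" using power_mono[OF h0(2) h0(1), of 3] h0 by (simp_all add: power_numeral_reduce)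
  have p4: "0 \<le> h ^ 4" "h ^ 4 \<le> (1/625)" using power_mono[OF h0(2) h0(1), of 4] h0 by (simp_all add: power_numeral_reduce)
  have p5: "0 \<le> h ^ 5" "h ^ 5 \<le> (1/3125)" using power_mono[OF h0(2) h0(1), of 5] h0 by (simp_all add: power_numeral_reduce)
  have p6: "0 \<le> h ^ 6" "h ^ 6 \<le> (1/15625)" using power_mono[OF h0(2) h0(1), of 6] h0 by (simp_all add: power_numeral_reduce)
  have p7: "0 \<le> h ^ 7" "h ^ 7 \<le> (1/78125)" using power_mono[OF h0(2) h0(1), of 7] h0 by (simp_all add: power_numeral_reduce)
  have e: "(- (71811/80000)) + (47/32) * a + (- (71811/160000)) * a ^ 2 + (5813/80000) * a ^ 3 + (- (3/128)) * a ^ 5 + (- (29/512)) * a ^ 7 = (63717597137/655360000000) + (13953456333/32768000000) * h + (- (2233227747/1638400000)) * h ^ 2 + (- (143651303/81920000)) * h ^ 3 + (- (1483577/819200)) * h ^ 4 + (- (224649/204800)) * h ^ 5 + (- (3857/10240)) * h ^ 6 + (- (29/512)) * h ^ 7" unfolding ah by algebra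
  have "0 \<le> (63717597137/655360000000) + (13953456333/32768000000) * h + (- (2233227747/1638400000)) * h ^ 2 + (- (143651303/81920000)) * h ^ 3 + (- (1483577/819200)) * h ^ 4 + (- (224649/204800)) * h ^ 5 + (- (3857/10240)) * h ^ 6 + (- (29/512)) * h ^ 7" using h0 p2 p3 p4 p5 p6 p7 by linarith
  then show ?thesis unfolding e .
qed

lemma piece7_V: fixes a :: real assumes "(19/20) \<le> a" "a \<le> (23/20)"
  shows "(17/64) + (- (23/256)) * a ^ 2 + (29/512) * a ^ 4 + (71811/160000) / a \<le> 1 - (4207/5000) * a ^ 2 / (2 + a ^ 2)"
proof -
  have e: "(- (71811/80000)) + (47/32) * a + (- (71811/160000)) * a ^ 2 + (5813/80000) * a ^ 3 + (- (3/128)) * a ^ 5 + (- (29/512)) * a ^ 7 = a * (2 + (1 - (4207/5000)) * a ^ 2) - (((17/64) + (- (23/256)) * a ^ 2 + (29/512) * a ^ 4) * a * (2 + a ^ 2) + (71811/160000) * (2 + a ^ 2))" by algebra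
  have "0 < a" using assms by simp
  then show ?thesis by (rule Q_to_V) (use piece7[OF assms] e in simp)
qed

lemma piece8: fixes a :: real assumes al: "(23/20) \<le> a" and au: "a \<le> (7/5)"
  shows "0 \<le> (- (3518739/3125000)) + (5346/3125) * a + (- (3518739/6250000)) * a ^ 2 + (9681/125000) * a ^ 3 + (11568/1953125) * a ^ 5 + (- (25216/1953125)) * a ^ 7"
proof -
  define h where "h = a - (23/20)"
  have ah: "a = (23/20) + h" unfolding h_def by simp
  have h0: "0 \<le> h" "h \<le> (1/4)" using al au unfolding h_def by simp_all
  have p2: "0 \<le> h ^ 2" "h ^ 2 \<le> (1/16)" using power_mono[OF h0(2) h0(1), of 2] h0 by (simp_all add: power_numeral_reduce)
  have p3: "0 \<le> h ^ 3" "h ^ 3 \<le> (1/64)" using power_mono[OF h0(2) h0(1), of 3] h0 by (simp_all add: power_numeral_reduce)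
  have p4: "0 \<le> h ^ 4" "h ^ 4 \<le> (1/256)" using power_mono[OF h0(2) h0(1), of 4] h0 by (simp_all add: power_numeral_reduce)
  have p5: "0 \<le> h ^ 5" "h ^ 5 \<le> (1/1024)" using power_mono[OF h0(2) h0(1), of 5] h0 by (simp_all add: power_numeral_reduce)
  have p6: "0 \<le> h ^ 6" "h ^ 6 \<le> (1/4096)" using power_mono[OF h0(2) h0(1), of 6] h0 by (simp_all add: power_numeral_reduce)
  have p7: "0 \<le> h ^ 7" "h ^ 7 \<le> (1/16384)" using power_mono[OF h0(2) h0(1), of 7] h0 by (simp_all add: power_numeral_reduce)
  have e: "(- (3518739/3125000)) + (5346/3125) * a + (- (3518739/6250000)) * a ^ 2 + (9681/125000) * a ^ 3 + (11568/1953125) * a ^ 5 + (- (25216/1953125)) * a ^ 7 = (15009807948689/78125000000000) + (2210364501151/3906250000000) * h + (- (146689075089/195312500000)) * h ^ 2 + (- (1239350531/1953125000)) * h ^ 3 + (- (31893686/48828125)) * h ^ 4 + (- (17218584/48828125)) * h ^ 5 + (- (1014944/9765625)) * h ^ 6 + (- (25216/1953125)) * h ^ 7" unfolding ah by algebra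
  have "0 \<le> (15009807948689/78125000000000) + (2210364501151/3906250000000) * h + (- (146689075089/195312500000)) * h ^ 2 + (- (1239350531/1953125000)) * h ^ 3 + (- (31893686/48828125)) * h ^ 4 + (- (17218584/48828125)) * h ^ 5 + (- (1014944/9765625)) * h ^ 6 + (- (25216/1953125)) * h ^ 7" using h0 p2 p3 p4 p5 p6 p7 by linarith
  then show ?thesis unfolding e .
qed

lemma piece8_V: fixes a :: real assumes "(23/20) \<le> a" "a \<le> (7/5)"
  shows "(452/3125) + (- (496/15625)) * a ^ 2 + (25216/1953125) * a ^ 4 + (3518739/6250000) / a \<le> 1 - (4207/5000) * a ^ 2 / (2 + a ^ 2)"
proof -
  have e: "(- (3518739/3125000)) + (5346/3125) * a + (- (3518739/6250000)) * a ^ 2 + (9681/125000) * a ^ 3 + (11568/1953125) * a ^ 5 + (- (25216/1953125)) * a ^ 7 = a * (2 + (1 - (4207/5000)) * a ^ 2) - (((452/3125) + (- (496/15625)) * a ^ 2 + (25216/1953125) * a ^ 4) * a * (2 + a ^ 2) + (3518739/6250000) * (2 + a ^ 2))" by algebra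
  have "0 < a" using assms by simp
  then show ?thesis by (rule Q_to_V) (use piece8[OF assms] e in simp)
qed

lemma piece9: fixes a :: real assumes al: "(7/5) \<le> a" and au: "a \<le> (8/5)"
  shows "0 \<le> (- (3518739/3125000)) + (5346/3125) * a + (- (3518739/6250000)) * a ^ 2 + (9681/125000) * a ^ 3 + (11568/1953125) * a ^ 5 + (- (25216/1953125)) * a ^ 7"
proof -
  define h where "h = a - (7/5)"
  have ah: "a = (7/5) + h" unfolding h_def by simp
  have h0: "0 \<le> h" "h \<le> (1/5)" using al au unfolding h_def by simp_all
  have p2: "0 \<le> h ^ 2" "h ^ 2 \<le> (1/25)" using power_mono[OF h0(2) h0(1), of 2] h0 by (simp_all add: power_numeral_reduce)
  have p3: "0 \<le> h ^ 3" "h ^ 3 \<le> (1/125)" using power_mono[OF h0(2) h0(1), of 3] h0 by (simp_all add: power_numeral_reduce)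
  have p4: "0 \<le> h ^ 4" "h ^ 4 \<le> (1/625)" using power_mono[OF h0(2) h0(1), of 4] h0 by (simp_all add: power_numeral_reduce)
  have p5: "0 \<le> h ^ 5" "h ^ 5 \<le> (1/3125)" using power_mono[OF h0(2) h0(1), of 5] h0 by (simp_all add: power_numeral_reduce)
  have p6: "0 \<le> h ^ 6" "h ^ 6 \<le> (1/15625)" using power_mono[OF h0(2) h0(1), of 6] h0 by (simp_all add: power_numeral_reduce)
  have p7: "0 \<le> h ^ 7" "h ^ 7 \<le> (1/78125)" using power_mono[OF h0(2) h0(1), of 7] h0 by (simp_all add: power_numeral_reduce)
  have e: "(- (3518739/3125000)) + (5346/3125) * a + (- (3518739/6250000)) * a ^ 2 + (9681/125000) * a ^ 3 + (11568/1953125) * a ^ 5 + (- (25216/1953125)) * a ^ 7 = (668485188917/2441406250000) + (2808745973/122070312500) * h + (- (149741804457/97656250000)) * h ^ 2 + (- (3012444071/1953125000)) * h ^ 3 + (- (58519216/48828125)) * h ^ 4 + (- (25658064/48828125)) * h ^ 5 + (- (1235584/9765625)) * h ^ 6 + (- (25216/1953125)) * h ^ 7" unfolding ah by algebra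
  have "0 \<le> (668485188917/2441406250000) + (2808745973/122070312500) * h + (- (149741804457/97656250000)) * h ^ 2 + (- (3012444071/1953125000)) * h ^ 3 + (- (58519216/48828125)) * h ^ 4 + (- (25658064/48828125)) * h ^ 5 + (- (1235584/9765625)) * h ^ 6 + (- (25216/1953125)) * h ^ 7" using h0 p2 p3 p4 p5 p6 p7 by linarith
  then show ?thesis unfolding e .
qed

lemma piece9_V: fixes a :: real assumes "(7/5) \<le> a" "a \<le> (8/5)"
  shows "(452/3125) + (- (496/15625)) * a ^ 2 + (25216/1953125) * a ^ 4 + (3518739/6250000) / a \<le> 1 - (4207/5000) * a ^ 2 / (2 + a ^ 2)"
proof -
  have e: "(- (3518739/3125000)) + (5346/3125) * a + (- (3518739/6250000)) * a ^ 2 + (9681/125000) * a ^ 3 + (11568/1953125) * a ^ 5 + (- (25216/1953125)) * a ^ 7 = a * (2 + (1 - (4207/5000)) * a ^ 2) - (((452/3125) + (- (496/15625)) * a ^ 2 + (25216/1953125) * a ^ 4) * a * (2 + a ^ 2) + (3518739/6250000) * (2 + a ^ 2))" by algebra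
  have "0 < a" using assms by simp
  then show ?thesis by (rule Q_to_V) (use piece9[OF assms] e in simp)
qed

lemma R_le_V:
  fixes a s :: real assumes a: "0 < a" and s: "0 < s" "s \<le> 1"
  defines "b \<equiv> (1/s ^ 2 - 1)/2" and "c \<equiv> sqrt (2/pi)"
  shows "integral\<^sup>L lborel (\<lambda>z. std_normal_density z * (z * tanh (a * z) / a)) \<le>
    c * (1/a) + s * (s ^ 2 + (b - a ^ 2 / 3) * (3 * s ^ 4) + (2 * a ^ 4 / 15 - a ^ 2 * b / 3) * (15 * s ^ 6)
       + (2 * a ^ 4 * b / 15) * (105 * s ^ 8) - (s * c + b * (2 * s ^ 3 * c)) * (1/a))"
proof -
  have hb: "has_bochner_integral lborel (\<lambda>z. std_normal_density z * maj a b z)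
    (c * (1/a) + s * (s ^ 2 + (b - a ^ 2 / 3) * (3 * s ^ 4) + (2 * a ^ 4 / 15 - a ^ 2 * b / 3) * (15 * s ^ 6)
       + (2 * a ^ 4 * b / 15) * (105 * s ^ 8) - (s * c + b * (2 * s ^ 3 * c)) * (1/a)))"
    unfolding b_def c_def by (rule maj_integral[OF s(1)])
  have b0: "0 \<le> b"
  proof -
    have "s ^ 2 \<le> 1" using s by (simp add: power_le_one)
    then have "1 \<le> 1 / s ^ 2" using s by (simp add: field_simps)
    then show ?thesis unfolding b_def by simp
  qed
  have "integral\<^sup>L lborel (\<lambda>z. std_normal_density z * (z * tanh (a * z) / a)) \<le>
        integral\<^sup>L lborel (\<lambda>z. std_normal_density z * maj a b z)"
    by (rule integral_mono[OF integrable_tanh_term[OF a] integrable.intros[OF hb]])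
       (use maj_bound[OF a b0] in \<open>auto intro!: mult_left_mono simp del: times_divide_eq_right\<close>)
  also note has_bochner_integral_integral_eq[OF hb]
  finally show ?thesis .
qed

lemma V_closed:
  fixes a s c :: real assumes a: "0 < a"
  defines "b \<equiv> (1/s ^ 2 - 1)/2"
  shows "c * (1/a) + s * (s ^ 2 + (b - a ^ 2 / 3) * (3 * s ^ 4) + (2 * a ^ 4 / 15 - a ^ 2 * b / 3) * (15 * s ^ 6)
       + (2 * a ^ 4 * b / 15) * (105 * s ^ 8) - (s * c + b * (2 * s ^ 3 * c)) * (1/a))
   = (s ^ 3 + 3 * b * s ^ 5) + (- (s ^ 5) - 5 * b * s ^ 7) * a ^ 2 + (2 * s ^ 7 + 14 * b * s ^ 9) * a ^ 4
     + c * (1 - s ^ 2 - 2 * b * s ^ 4) * (1/a)"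
  by algebra

lemma c_le: "sqrt (2/pi) \<le> 7979/10000"
proof -
  have "2/pi \<le> 2 / 3.141592653588" using pi_approx(1) by (intro divide_left_mono) auto
  also have "\<dots> \<le> (7979/10000) ^ 2" by (simp add: power2_eq_square)
  finally have "sqrt (2/pi) \<le> sqrt ((7979/10000) ^ 2)" by (rule real_sqrt_le_mono)
  then show ?thesis by simp
qed

lemma c_pos: "0 \<le> sqrt (2/pi)" by simp

lemma apply_piece:
  fixes I X0 X2 X4 Y A0 A2 A4 K T c cc a :: real
  assumes "I \<le> X0 + X2 * a ^ 2 + X4 * a ^ 4 + c * Y * (1/a)" "X0 = A0" "X2 = A2" "X4 = A4"
    "cc * Y = K" "0 \<le> Y" "c \<le> cc" "0 < a" "A0 + A2 * a ^ 2 + A4 * a ^ 4 + K / a \<le> T"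
  shows "I \<le> T"
proof -
  have "c * Y * (1/a) \<le> cc * Y * (1/a)" using assms(6,7,8) by (intro mult_right_mono) auto
  then show ?thesis using assms by simp
qed

abbreviation Rint :: "real \<Rightarrow> real" where
  "Rint a \<equiv> integral\<^sup>L lborel (\<lambda>z. std_normal_density z * (z * tanh (a * z) / a))"

lemma R_closed:
  fixes a s :: real assumes a: "0 < a" and s: "0 < s" "s \<le> 1"
  defines "b \<equiv> (1/s ^ 2 - 1)/2"
  shows "Rint a \<le> (s ^ 3 + 3 * b * s ^ 5) + (- (s ^ 5) - 5 * b * s ^ 7) * a ^ 2 + (2 * s ^ 7 + 14 * b * s ^ 9) * a ^ 4
     + sqrt (2/pi) * (1 - s ^ 2 - 2 * b * s ^ 4) * (1/a)"
proof -
  note R_le_V[OF a s]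
  also note V_closed[OF a, where s=s and c="sqrt (2/pi)"]
  finally show ?thesis unfolding b_def .
qed

lemma upper_piece0: fixes a :: real assumes "(11/20) \<le> a" "a \<le> (93/160)"
  shows "Rint a \<le> 1 - (4207/5000) * a ^ 2 / (2 + a ^ 2)"
proof (rule apply_piece[where cc="7979/10000", OF R_closed[of a "(3/4)"]])
  show "0 < a" using assms by simp
  show "(1431/2048) + (- (16281/32768)) * a ^ 2 + (177147/262144) * a ^ 4 + (390971/2560000) / a \<le> 1 - (4207/5000) * a ^ 2 / (2 + a ^ 2)" by (rule piece0_V[OF assms])
qed (use assms c_le in \<open>simp_all add: power_numeral_reduce\<close>)

lemma upper_piece1: fixes a :: real assumes "(93/160) \<le> a" "a \<le> (103/160)"
  shows "Rint a \<le> 1 - (4207/5000) * a ^ 2 / (2 + a ^ 2)"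
proof (rule apply_piece[where cc="7979/10000", OF R_closed[of a "(3/4)"]])
  show "0 < a" using assms by simp
  show "(1431/2048) + (- (16281/32768)) * a ^ 2 + (177147/262144) * a ^ 4 + (390971/2560000) / a \<le> 1 - (4207/5000) * a ^ 2 / (2 + a ^ 2)" by (rule piece1_V[OF assms])
qed (use assms c_le in \<open>simp_all add: power_numeral_reduce\<close>)

lemma upper_piece2: fixes a :: real assumes "(103/160) \<le> a" "a \<le> (17/25)"
  shows "Rint a \<le> 1 - (4207/5000) * a ^ 2 / (2 + a ^ 2)"
proof (rule apply_piece[where cc="7979/10000", OF R_closed[of a "(3/4)"]])
  show "0 < a" using assms by simp
  show "(1431/2048) + (- (16281/32768)) * a ^ 2 + (177147/262144) * a ^ 4 + (390971/2560000) / a \<le> 1 - (4207/5000) * a ^ 2 / (2 + a ^ 2)" by (rule piece2_V[OF assms])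
qed (use assms c_le in \<open>simp_all add: power_numeral_reduce\<close>)

lemma upper_piece3: fixes a :: real assumes "(17/25) \<le> a" "a \<le> (3/4)"
  shows "Rint a \<le> 1 - (4207/5000) * a ^ 2 / (2 + a ^ 2)"
proof (rule apply_piece[where cc="7979/10000", OF R_closed[of a "(7/10)"]])
  show "0 < a" using assms by simp
  show "(121079/200000) + (- (1529437/4000000)) * a ^ 2 + (458713451/1000000000) * a ^ 4 + (20753379/100000000) / a \<le> 1 - (4207/5000) * a ^ 2 / (2 + a ^ 2)" by (rule piece3_V[OF assms])
qed (use assms c_le in \<open>simp_all add: power_numeral_reduce\<close>)

lemma upper_piece4: fixes a :: real assumes "(3/4) \<le> a" "a \<le> (13/16)"
  shows "Rint a \<le> 1 - (4207/5000) * a ^ 2 / (2 + a ^ 2)"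
proof (rule apply_piece[where cc="7979/10000", OF R_closed[of a "(3/5)"]])
  show "0 < a" using assms by simp
  show "(1323/3125) + (- (3159/15625)) * a ^ 2 + (354294/1953125) * a ^ 4 + (127664/390625) / a \<le> 1 - (4207/5000) * a ^ 2 / (2 + a ^ 2)" by (rule piece4_V[OF assms])
qed (use assms c_le in \<open>simp_all add: power_numeral_reduce\<close>)

lemma upper_piece5: fixes a :: real assumes "(13/16) \<le> a" "a \<le> (15/16)"
  shows "Rint a \<le> 1 - (4207/5000) * a ^ 2 / (2 + a ^ 2)"
proof (rule apply_piece[where cc="7979/10000", OF R_closed[of a "(3/5)"]])
  show "0 < a" using assms by simp
  show "(1323/3125) + (- (3159/15625)) * a ^ 2 + (354294/1953125) * a ^ 4 + (127664/390625) / a \<le> 1 - (4207/5000) * a ^ 2 / (2 + a ^ 2)" by (rule piece5_V[OF assms])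
qed (use assms c_le in \<open>simp_all add: power_numeral_reduce\<close>)

lemma upper_piece6: fixes a :: real assumes "(15/16) \<le> a" "a \<le> (19/20)"
  shows "Rint a \<le> 1 - (4207/5000) * a ^ 2 / (2 + a ^ 2)"
proof (rule apply_piece[where cc="7979/10000", OF R_closed[of a "(3/5)"]])
  show "0 < a" using assms by simp
  show "(1323/3125) + (- (3159/15625)) * a ^ 2 + (354294/1953125) * a ^ 4 + (127664/390625) / a \<le> 1 - (4207/5000) * a ^ 2 / (2 + a ^ 2)" by (rule piece6_V[OF assms])
qed (use assms c_le in \<open>simp_all add: power_numeral_reduce\<close>)

lemma upper_piece7: fixes a :: real assumes "(19/20) \<le> a" "a \<le> (23/20)"
  shows "Rint a \<le> 1 - (4207/5000) * a ^ 2 / (2 + a ^ 2)"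
proof (rule apply_piece[where cc="7979/10000", OF R_closed[of a "(1/2)"]])
  show "0 < a" using assms by simp
  show "(17/64) + (- (23/256)) * a ^ 2 + (29/512) * a ^ 4 + (71811/160000) / a \<le> 1 - (4207/5000) * a ^ 2 / (2 + a ^ 2)" by (rule piece7_V[OF assms])
qed (use assms c_le in \<open>simp_all add: power_numeral_reduce\<close>)

lemma upper_piece8: fixes a :: real assumes "(23/20) \<le> a" "a \<le> (7/5)"
  shows "Rint a \<le> 1 - (4207/5000) * a ^ 2 / (2 + a ^ 2)"
proof (rule apply_piece[where cc="7979/10000", OF R_closed[of a "(2/5)"]])
  show "0 < a" using assms by simp
  show "(452/3125) + (- (496/15625)) * a ^ 2 + (25216/1953125) * a ^ 4 + (3518739/6250000) / a \<le> 1 - (4207/5000) * a ^ 2 / (2 + a ^ 2)" by (rule piece8_V[OF assms])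
qed (use assms c_le in \<open>simp_all add: power_numeral_reduce\<close>)

lemma upper_piece9: fixes a :: real assumes "(7/5) \<le> a" "a \<le> (8/5)"
  shows "Rint a \<le> 1 - (4207/5000) * a ^ 2 / (2 + a ^ 2)"
proof (rule apply_piece[where cc="7979/10000", OF R_closed[of a "(2/5)"]])
  show "0 < a" using assms by simp
  show "(452/3125) + (- (496/15625)) * a ^ 2 + (25216/1953125) * a ^ 4 + (3518739/6250000) / a \<le> 1 - (4207/5000) * a ^ 2 / (2 + a ^ 2)" by (rule piece9_V[OF assms])
qed (use assms c_le in \<open>simp_all add: power_numeral_reduce\<close>)

lemma upper_small: fixes a :: real assumes a: "0 < a" "a \<le> 11/20"
  shows "Rint a \<le> 1 - (4207/5000) * a ^ 2 / (2 + a ^ 2)"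
proof -
  have one: "(0::real) < 1" "(1::real) \<le> 1" by simp_all
  have "Rint a \<le> 1 + (- 1) * a ^ 2 + 2 * a ^ 4 + 0 / a"
    using R_closed[OF a(1) one] by simp
  also have "\<dots> \<le> 1 - (4207/5000) * a ^ 2 / (2 + a ^ 2)"
  proof (rule Q_to_V[OF a(1)])
    have a2: "a ^ 2 \<le> 121/400" using power_mono[OF a(2), of 2] a by (simp add: power2_eq_square)
    have a4: "a ^ 4 \<le> (121/400) ^ 2" using power_mono[OF a2, of 2] by (simp add: power_numeral_reduce)
    have "0 \<le> (2 - 4207/5000) - 3 * a ^ 2 - 2 * a ^ 4" using a2 a4 by (simp add: power2_eq_square)
    then have "0 \<le> a ^ 3 * ((2 - 4207/5000) - 3 * a ^ 2 - 2 * a ^ 4)" using a by simp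
    moreover have "a ^ 3 * ((2 - 4207/5000) - 3 * a ^ 2 - 2 * a ^ 4) =
       a * (2 + (1 - 4207/5000) * a ^ 2) - ((1 + (- 1) * a ^ 2 + 2 * a ^ 4) * a * (2 + a ^ 2) + 0 * (2 + a ^ 2))"
      by algebra
    ultimately show "0 \<le> a * (2 + (1 - 4207/5000) * a ^ 2) - ((1 + (- 1) * a ^ 2 + 2 * a ^ 4) * a * (2 + a ^ 2) + 0 * (2 + a ^ 2))"
      by simp
  qed
  finally show ?thesis .
qed

lemma upper_large: fixes a :: real assumes a: "8/5 \<le> a"
  shows "Rint a \<le> 1 - (4207/5000) * a ^ 2 / (2 + a ^ 2)"
proof -
  have a0: "0 < a" using a by simp
  have one: "(0::real) < 1" by simp
  have hb: "has_bochner_integral lborel (\<lambda>z. std_normal_density z * \<bar>z\<bar> / a) (sqrt (2/pi) / a)"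
    using has_bochner_integral_divide_zero[OF mom_abs1[OF one], of a] by simp
  have "Rint a \<le> integral\<^sup>L lborel (\<lambda>z. std_normal_density z * \<bar>z\<bar> / a)"
  proof (rule integral_mono[OF integrable_tanh_term[OF a0] integrable.intros[OF hb]])
    fix z :: real
    have "\<bar>tanh (a * z)\<bar> \<le> 1" using tanh_real_bounds[of "a*z"] by auto
    then have "\<bar>z\<bar> * \<bar>tanh (a * z)\<bar> \<le> \<bar>z\<bar>" using mult_left_mono[of _ 1 "\<bar>z\<bar>"] by simp
    moreover have "z * tanh (a * z) \<le> \<bar>z\<bar> * \<bar>tanh (a * z)\<bar>" by (simp add: abs_mult[symmetric])
    ultimately have "z * tanh (a * z) \<le> \<bar>z\<bar>" by linarith
    then have "z * tanh (a * z) / a \<le> \<bar>z\<bar> / a" using a0 by (simp add: divide_right_mono)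
    then show "std_normal_density z * (z * tanh (a * z) / a) \<le> std_normal_density z * \<bar>z\<bar> / a"
      using mult_left_mono[OF _ normal_density_nonneg] by (simp add: times_divide_eq_right[symmetric] del: times_divide_eq_right)
  qed
  also have "\<dots> = sqrt (2/pi) / a" by (rule has_bochner_integral_integral_eq[OF hb])
  also have "\<dots> \<le> (7979/10000) / a" using divide_right_mono[OF c_le, of a] a0 by simp
  also have "\<dots> = 0 + 0 * a ^ 2 + 0 * a ^ 4 + (7979/10000) / a" by simp
  also have "\<dots> \<le> 1 - (4207/5000) * a ^ 2 / (2 + a ^ 2)"
  proof (rule Q_to_V[OF a0])
    define h where "h = a - 8/5"
    have ah: "a = 8/5 + h" unfolding h_def by simp
    have h0: "0 \<le> h" using a unfolding h_def by simp
    have e: "a * (2 + (1 - 4207/5000) * a ^ 2) - ((0 + 0 * a ^ 2 + 0 * a ^ 4) * a * (2 + a ^ 2) + 7979/10000 * (2 + a ^ 2))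
      = 132001/625000 + h * (10387/15625 + (- (1831/50000)) * h + (793/5000) * h ^ 2)"
      unfolding ah by algebra
    have "0 \<le> 10387/15625 + (- (1831/50000)) * h + (793/5000) * h ^ 2"
    proof (cases "h \<le> 1")
      case True
      have "0 \<le> h ^ 2" by simp
      then show ?thesis using h0 True by linarith
    next
      case False
      then have "h \<le> h ^ 2" by (simp add: power2_eq_square)
      then show ?thesis using h0 by linarith
    qed
    then have "0 \<le> h * (10387/15625 + (- (1831/50000)) * h + (793/5000) * h ^ 2)" using h0 by simp
    then show "0 \<le> a * (2 + (1 - 4207/5000) * a ^ 2) - ((0 + 0 * a ^ 2 + 0 * a ^ 4) * a * (2 + a ^ 2) + 7979/10000 * (2 + a ^ 2))"
      unfolding e by simp
  qed
  finally show ?thesis .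
qed

lemma upper_1d: fixes a :: real assumes a: "0 < a"
  shows "Rint a \<le> 1 - (4207/5000) * a ^ 2 / (2 + a ^ 2)"
proof -
  consider "a \<le> 11/20" | "11/20 \<le> a \<and> a \<le> 93/160" | "93/160 \<le> a \<and> a \<le> 103/160"
    | "103/160 \<le> a \<and> a \<le> 17/25" | "17/25 \<le> a \<and> a \<le> 3/4" | "3/4 \<le> a \<and> a \<le> 13/16"
    | "13/16 \<le> a \<and> a \<le> 15/16" | "15/16 \<le> a \<and> a \<le> 19/20" | "19/20 \<le> a \<and> a \<le> 23/20"
    | "23/20 \<le> a \<and> a \<le> 7/5" | "7/5 \<le> a \<and> a \<le> 8/5" | "8/5 \<le> a" by linarith
  then show ?thesis
    by cases (use a upper_small upper_large upper_piece0 upper_piece1 upper_piece2 upper_piece3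
      upper_piece4 upper_piece5 upper_piece6 upper_piece7 upper_piece8 upper_piece9 in blast)+
qed

lemma lower_1d: fixes a :: real assumes a: "0 < a" and a2: "a ^ 2 \<le> 5/8"
  shows "1 / (1 + 2 * a ^ 2) \<le> Rint a"
proof -
  define r where "r = sqrt (1 + a ^ 2)"
  have r0: "0 < r" unfolding r_def by (simp add: add_pos_nonneg)
  have r2: "r ^ 2 = 1 + a ^ 2" unfolding r_def by (simp add: add_nonneg_nonneg)
  define s where "s = 1 / r"
  have s0: "0 < s" using r0 unfolding s_def by simp
  have bdef: "(1 / s ^ 2 - 1) / 2 = a ^ 2 / 2" unfolding s_def using r2 by (simp add: power_divide)
  have hb: "has_bochner_integral lborel (\<lambda>z. std_normal_density z * (z ^ 2 * exp (-(a ^ 2 / 2 * z ^ 2)))) (s * s ^ 2)"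
  proof -
    have "has_bochner_integral lborel (\<lambda>z. s * (normal_density 0 s z * z ^ 2)) (s * s ^ 2)"
      by (intro has_bochner_integral_mult_right mom2[OF s0])
    moreover have "\<And>z. s * (normal_density 0 s z * z ^ 2) = std_normal_density z * (z ^ 2 * exp (-(a ^ 2 / 2 * z ^ 2)))"
      using nd_weight[OF s0] unfolding bdef by (simp add: algebra_simps)
    ultimately show ?thesis by simp
  qed
  have "s * s ^ 2 \<le> Rint a"
  proof -
    have "integral\<^sup>L lborel (\<lambda>z. std_normal_density z * (z ^ 2 * exp (-(a ^ 2 / 2 * z ^ 2)))) \<le> Rint a"
    proof (rule integral_mono[OF integrable.intros[OF hb] integrable_tanh_term[OF a]])
      fix z :: real
      have y: "0 \<le> a * \<bar>z\<bar>" using a by simp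
      have "a * \<bar>z\<bar> * exp (-((a * \<bar>z\<bar>) ^ 2)/2) \<le> tanh (a * \<bar>z\<bar>)" by (rule tanh_ge_gauss[OF y])
      then have "\<bar>z\<bar> * (a * \<bar>z\<bar> * exp (-((a * \<bar>z\<bar>) ^ 2)/2)) \<le> \<bar>z\<bar> * tanh (a * \<bar>z\<bar>)"
        by (intro mult_left_mono) auto
      moreover have "\<bar>z\<bar> * tanh (a * \<bar>z\<bar>) = z * tanh (a * z)" by (simp only: tanh_abs_mult[of z a])
      moreover have "\<bar>z\<bar> * (a * \<bar>z\<bar> * exp (-((a * \<bar>z\<bar>) ^ 2)/2)) = a * (z ^ 2 * exp (-(a ^ 2 / 2 * z ^ 2)))"
      proof -
        have e1: "-((a * \<bar>z\<bar>) ^ 2)/2 = -(a ^ 2 / 2 * z ^ 2)" by (simp add: power_mult_distrib)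
        have e2: "\<bar>z\<bar> * \<bar>z\<bar> = z ^ 2" by (simp add: power2_eq_square)
        have "\<bar>z\<bar> * (a * \<bar>z\<bar> * exp (-((a * \<bar>z\<bar>) ^ 2)/2)) = a * ((\<bar>z\<bar> * \<bar>z\<bar>) * exp (-((a * \<bar>z\<bar>) ^ 2)/2))"
          by (simp only: mult.assoc mult.left_commute)
        then show ?thesis unfolding e1 e2 .
      qed
      ultimately have "a * (z ^ 2 * exp (-(a ^ 2 / 2 * z ^ 2))) \<le> z * tanh (a * z)" by linarith
      then have "z ^ 2 * exp (-(a ^ 2 / 2 * z ^ 2)) \<le> z * tanh (a * z) / a" using a by (simp add: field_simps)
      then show "std_normal_density z * (z ^ 2 * exp (-(a ^ 2 / 2 * z ^ 2))) \<le> std_normal_density z * (z * tanh (a * z) / a)"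
        by (intro mult_left_mono) auto
    qed
    then show ?thesis using has_bochner_integral_integral_eq[OF hb] by simp
  qed
  moreover have "1 / (1 + 2 * a ^ 2) \<le> s * s ^ 2"
  proof -
    have "(r ^ 3) ^ 2 \<le> (1 + 2 * a ^ 2) ^ 2"
    proof -
      have "(r ^ 3) ^ 2 = (r ^ 2) ^ 3" by (simp add: power_mult[symmetric] mult.commute)
      also have "\<dots> = (1 + a ^ 2) ^ 3" by (simp add: r2)
      also have "\<dots> \<le> (1 + 2 * a ^ 2) ^ 2"
      proof -
        have "a ^ 4 \<le> 5/8 * a ^ 2" using mult_right_mono[OF a2, of "a ^ 2"] by (simp add: power_numeral_reduce algebra_simps)
        then have "a ^ 6 \<le> 5/8 * a ^ 4" using mult_right_mono[of "a ^ 4" "5/8 * a ^ 2" "a ^ 2"] by (simp add: power_numeral_reduce algebra_simps)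
        moreover have "(1 + 2 * a ^ 2) ^ 2 - (1 + a ^ 2) ^ 3 = a ^ 2 + a ^ 4 - a ^ 6" by algebra
        moreover have "0 \<le> a ^ 2" "0 \<le> a ^ 4" by simp_all
        ultimately show ?thesis by linarith
      qed
      finally show ?thesis .
    qed
    then have "r ^ 3 \<le> 1 + 2 * a ^ 2" by (rule power2_le_imp_le) (simp add: add_nonneg_nonneg)
    then have "1 / (1 + 2 * a ^ 2) \<le> 1 / r ^ 3" using r0 by (intro divide_left_mono) (auto intro!: mult_pos_pos add_pos_nonneg)
    also have "1 / r ^ 3 = s * s ^ 2" unfolding s_def by (simp add: power_divide power3_eq_cube power2_eq_square)
    finally show ?thesis .
  qed
  ultimately show ?thesis by linarith
qed

lemma expm_L2: fixes y :: real assumes y: "0 \<le> y" shows "exp (-y) \<le> 1 - y + y ^ 2 / 2"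
proof -
  have "(\<lambda>t. 1 - t + t ^ 2 / 2 - exp (-t)) 0 \<le> (\<lambda>t. 1 - t + t ^ 2 / 2 - exp (-t)) y"
  proof (rule DERIV_nonneg_imp_nondecreasing[OF y])
    fix t :: real assume "0 \<le> t"
    have "1 - t \<le> exp (-t)" using exp_ge_add_one_self[of "-t"] by simp
    then show "\<exists>d. ((\<lambda>t. 1 - t + t ^ 2 / 2 - exp (-t)) has_real_derivative d) (at t) \<and> 0 \<le> d"
      by (intro exI[of _ "- 1 + 2 * t / 2 + exp (-t)"]) (auto intro!: derivative_eq_intros)
  qed
  then show ?thesis by simp
qed

lemma expm_L3: fixes y :: real assumes y: "0 \<le> y" shows "1 - y + y ^ 2 / 2 - y ^ 3 / 6 \<le> exp (-y)"
proof -
  have "(\<lambda>t. exp (-t) - (1 - t + t ^ 2 / 2 - t ^ 3 / 6)) 0 \<le> (\<lambda>t. exp (-t) - (1 - t + t ^ 2 / 2 - t ^ 3 / 6)) y"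
  proof (rule DERIV_nonneg_imp_nondecreasing[OF y])
    fix t :: real assume t: "0 \<le> t"
    have "exp (-t) \<le> 1 - t + t ^ 2 / 2" by (rule expm_L2[OF t])
    then show "\<exists>d. ((\<lambda>t. exp (-t) - (1 - t + t ^ 2 / 2 - t ^ 3 / 6)) has_real_derivative d) (at t) \<and> 0 \<le> d"
      by (intro exI[of _ "- exp (-t) - (- 1 + 2 * t / 2 - 3 * t ^ 2 / 6)"]) (auto intro!: derivative_eq_intros)
  qed
  then show ?thesis by simp
qed

lemma expm_L4: fixes y :: real assumes y: "0 \<le> y" shows "exp (-y) \<le> 1 - y + y ^ 2 / 2 - y ^ 3 / 6 + y ^ 4 / 24"
proof -
  have "(\<lambda>t. 1 - t + t ^ 2 / 2 - t ^ 3 / 6 + t ^ 4 / 24 - exp (-t)) 0 \<le> (\<lambda>t. 1 - t + t ^ 2 / 2 - t ^ 3 / 6 + t ^ 4 / 24 - exp (-t)) y"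
  proof (rule DERIV_nonneg_imp_nondecreasing[OF y])
    fix t :: real assume t: "0 \<le> t"
    have "1 - t + t ^ 2 / 2 - t ^ 3 / 6 \<le> exp (-t)" by (rule expm_L3[OF t])
    then show "\<exists>d. ((\<lambda>t. 1 - t + t ^ 2 / 2 - t ^ 3 / 6 + t ^ 4 / 24 - exp (-t)) has_real_derivative d) (at t) \<and> 0 \<le> d"
      by (intro exI[of _ "- 1 + 2 * t / 2 - 3 * t ^ 2 / 6 + 4 * t ^ 3 / 24 + exp (-t)"]) (auto intro!: derivative_eq_intros)
  qed
  then show ?thesis by simp
qed

definition ppoly :: "real \<Rightarrow> real" where
  "ppoly x = 1 - x ^ 2 / 2 + x ^ 4 / 8 - x ^ 6 / 48 + x ^ 8 / 384"
definition pint :: "real \<Rightarrow> real" where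
  "pint x = x - x ^ 3 / 6 + x ^ 5 / 40 - x ^ 7 / 336 + x ^ 9 / 3456"

lemma std_le_ppoly: "std_normal_density x \<le> (1 / sqrt (2 * pi)) * ppoly x"
proof -
  have y: "0 \<le> x ^ 2 / 2" by simp
  have "exp (- (x ^ 2 / 2)) \<le> 1 - (x ^ 2 / 2) + (x ^ 2 / 2) ^ 2 / 2 - (x ^ 2 / 2) ^ 3 / 6 + (x ^ 2 / 2) ^ 4 / 24"
    by (rule expm_L4[OF y])
  also have "\<dots> = ppoly x" unfolding ppoly_def by (simp add: power_divide power_mult[symmetric] algebra_simps)
  finally show ?thesis unfolding std_normal_density_def by (intro mult_left_mono) auto
qed

lemma q_bound: "measure (density lborel std_normal_density) {x. \<bar>x\<bar> \<le> 1} \<le> 6828/10000"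
proof -
  let ?N = "density lborel std_normal_density"
  have A: "{x::real. \<bar>x\<bar> \<le> 1} = {-1..1}" by auto
  have "measure ?N {-1..1} = integral\<^sup>L ?N (indicator {-1..1})" by simp
  also have "\<dots> = integral\<^sup>L lborel (\<lambda>x. std_normal_density x * indicator {-1..1} x)"
    by (subst integral_density) auto
  also have "\<dots> \<le> integral\<^sup>L lborel (\<lambda>x. indicator {-1..1} x *\<^sub>R ((1 / sqrt (2 * pi)) * ppoly x))"
  proof (rule integral_mono)
    show "integrable lborel (\<lambda>x. std_normal_density x * indicator {-1..1} x)"
      by (rule Bochner_Integration.integrable_bound[OF integrable_normal_density[where \<mu>=0 and \<sigma>=1]]) (auto split: split_indicator)
    show "integrable lborel (\<lambda>x. indicator {-1..1} x *\<^sub>R ((1 / sqrt (2 * pi)) * ppoly x))"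
    proof -
      have cont: "continuous_on {-1..1} (\<lambda>x. (1 / sqrt (2 * pi)) * ppoly x)"
        by (auto intro!: continuous_intros simp: ppoly_def)
      show ?thesis using borel_integrable_atLeastAtMost'[OF cont] unfolding set_integrable_def .
    qed
    fix x :: real
    show "std_normal_density x * indicator {-1..1} x \<le> indicator {-1..1} x *\<^sub>R ((1 / sqrt (2 * pi)) * ppoly x)"
      using std_le_ppoly[of x] by (auto split: split_indicator)
  qed
  also have "\<dots> = (1 / sqrt (2 * pi)) * pint 1 - (1 / sqrt (2 * pi)) * pint (-1)"
  proof (rule integral_FTC_atLeastAtMost)
    fix x :: real
    show "((\<lambda>x. (1 / sqrt (2 * pi)) * pint x) has_vector_derivative (1 / sqrt (2 * pi)) * ppoly x) (at x within {-1..1})"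
      unfolding has_real_derivative_iff_has_vector_derivative[symmetric] pint_def ppoly_def
      by (auto intro!: derivative_eq_intros simp: field_simps)
  qed (auto intro!: continuous_intros simp: ppoly_def)
  also have "\<dots> = (1 / sqrt (2 * pi)) * (2 * pint 1)" by (simp add: pint_def algebra_simps)
  also have "\<dots> \<le> (1 / 2.506628) * (2 * pint 1)"
  proof (rule mult_right_mono)
    have "2.506628 ^ 2 \<le> 2 * pi" using pi_approx(1) by (simp add: power2_eq_square)
    then have "sqrt (2.506628 ^ 2) \<le> sqrt (2 * pi)" by (rule real_sqrt_le_mono)
    then have "2.506628 \<le> sqrt (2 * pi)" by simp
    then show "1 / sqrt (2 * pi) \<le> 1 / 2.506628" by (intro divide_left_mono) auto
    show "0 \<le> 2 * pint 1" by (simp add: pint_def)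
  qed
  also have "\<dots> \<le> 6828/10000" by (simp add: pint_def)
  finally show ?thesis unfolding A .
qed

lemma p_const_eq: "p_const = (1 + measure (density lborel std_normal_density) {x. \<bar>x\<bar> \<le> 1}) / 2"
proof -
  interpret P: prob_space "density lborel std_normal_density" by (rule prob_space_normal_density) simp
  have "{x::real. \<bar>x\<bar> > 1} = space (density lborel std_normal_density) - {x. \<bar>x\<bar> \<le> 1}" by auto
  moreover have ev: "{x::real. \<bar>x\<bar> \<le> 1} \<in> P.events" by simp
  ultimately have "measure (density lborel std_normal_density) {x. \<bar>x\<bar> > 1} = 1 - measure (density lborel std_normal_density) {x. \<bar>x\<bar> \<le> 1}"
    using P.prob_compl[OF ev] by simp
  then show ?thesis unfolding p_const_def by (simp add: field_simps)
qed

lemma p_const_bounds: "1/2 \<le> p_const" "p_const \<le> 4207/5000"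
  unfolding p_const_eq using q_bound measure_nonneg[of "density lborel std_normal_density" "{x. \<bar>x\<bar> \<le> 1}"] by simp_all

abbreviation NN :: "real \<Rightarrow> real measure" where
  "NN \<sigma> \<equiv> density lborel (\<lambda>y. ennreal (normal_density 0 \<sigma> y))"

lemma inner_sum_basis: fixes f :: "'a::euclidean_space \<Rightarrow> real"
  assumes "b \<in> Basis" shows "(\<Sum>c\<in>Basis. f c *\<^sub>R c) \<bullet> b = f b"
  using assms by (simp add: inner_sum_left inner_Basis if_distrib cong: if_cong)

lemma indicator_PiE_prod: fixes A :: "'i \<Rightarrow> 'b set"
  assumes "f \<in> extensional I" "finite I"
  shows "(indicator (Pi\<^sub>E I A) f :: ennreal) = (\<Prod>i\<in>I. indicator (A i) (f i))"
  using assms by (auto simp: indicator_def PiE_def Pi_def)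

lemma density_PiM_eq:
  fixes \<sigma> :: real assumes s: "0 < \<sigma>"
  shows "density (\<Pi>\<^sub>M b\<in>(Basis::'a::euclidean_space set). lborel)
           (\<lambda>f. ennreal (\<Prod>b\<in>Basis. normal_density 0 \<sigma> (f b))) = (\<Pi>\<^sub>M b\<in>(Basis::'a set). NN \<sigma>)"
proof -
  interpret N: prob_space "NN \<sigma>" by (rule prob_space_normal_density) (simp add: s)
  interpret PS: product_sigma_finite "\<lambda>_::'a. NN \<sigma>" by standard
  interpret PL: product_sigma_finite "\<lambda>_::'a. lborel :: real measure" by standard
  show ?thesis
  proof (rule PS.PiM_eqI)
    show "finite (Basis::'a set)" by simp
    show "sets (density (\<Pi>\<^sub>M b\<in>(Basis::'a set). lborel) (\<lambda>f. ennreal (\<Prod>b\<in>Basis. normal_density 0 \<sigma> (f b))))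
      = sets (\<Pi>\<^sub>M b\<in>(Basis::'a set). NN \<sigma>)"
      by (simp cong: sets_PiM_cong)
    fix A :: "'a \<Rightarrow> real set" assume A: "\<And>i. i \<in> Basis \<Longrightarrow> A i \<in> sets (NN \<sigma>)"
    then have A': "\<And>i. i \<in> Basis \<Longrightarrow> A i \<in> sets borel" by simp
    have "emeasure (density (\<Pi>\<^sub>M b\<in>(Basis::'a set). lborel) (\<lambda>f. ennreal (\<Prod>b\<in>Basis. normal_density 0 \<sigma> (f b)))) (Pi\<^sub>E Basis A)
       = (\<integral>\<^sup>+ f. ennreal (\<Prod>b\<in>Basis. normal_density 0 \<sigma> (f b)) * indicator (Pi\<^sub>E Basis A) f \<partial>(\<Pi>\<^sub>M b\<in>(Basis::'a set). lborel))"
      by (rule emeasure_density) (use A' in \<open>auto intro!: sets_PiM_I_finite\<close>)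
    also have "\<dots> = (\<integral>\<^sup>+ f. (\<Prod>b\<in>Basis. ennreal (normal_density 0 \<sigma> (f b)) * indicator (A b) (f b)) \<partial>(\<Pi>\<^sub>M b\<in>(Basis::'a set). lborel))"
    proof (rule nn_integral_cong)
      fix f assume f: "f \<in> space (\<Pi>\<^sub>M b\<in>(Basis::'a set). (lborel::real measure))"
      then have fe: "f \<in> extensional Basis" by (simp add: space_PiM PiE_def)
      show "ennreal (\<Prod>b\<in>Basis. normal_density 0 \<sigma> (f b)) * indicator (Pi\<^sub>E Basis A) f
          = (\<Prod>b\<in>Basis. ennreal (normal_density 0 \<sigma> (f b)) * indicator (A b) (f b))"
        by (simp add: indicator_PiE_prod[OF fe] prod.distrib prod_ennreal)
    qed
    also have "\<dots> = (\<Prod>b\<in>Basis. \<integral>\<^sup>+ y. ennreal (normal_density 0 \<sigma> y) * indicator (A b) y \<partial>lborel)"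
      by (rule PL.product_nn_integral_prod) (use A' in auto)
    also have "\<dots> = (\<Prod>b\<in>Basis. emeasure (NN \<sigma>) (A b))"
      by (rule prod.cong[OF refl]) (use A' in \<open>simp add: emeasure_density\<close>)
    finally show "emeasure (density (\<Pi>\<^sub>M b\<in>(Basis::'a set). lborel) (\<lambda>f. ennreal (\<Prod>b\<in>Basis. normal_density 0 \<sigma> (f b)))) (Pi\<^sub>E Basis A)
       = (\<Prod>b\<in>Basis. emeasure (NN \<sigma>) (A b))" .
  qed
qed

lemma iso_gaussian_distr:
  fixes \<sigma> :: real assumes s: "0 < \<sigma>"
  shows "(iso_gaussian \<sigma> :: 'a::euclidean_space measure) =
    distr (\<Pi>\<^sub>M b\<in>(Basis::'a set). NN \<sigma>) borel (\<lambda>f. \<Sum>b\<in>Basis. f b *\<^sub>R b)"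
proof -
  let ?g = "\<lambda>x::'a. ennreal (\<Prod>b\<in>Basis. normal_density 0 \<sigma> (x \<bullet> b))"
  let ?S = "\<lambda>f. \<Sum>b\<in>(Basis::'a set). f b *\<^sub>R b"
  have e1: "density (\<Pi>\<^sub>M b\<in>(Basis::'a set). lborel) (\<lambda>f. ?g (?S f))
      = density (\<Pi>\<^sub>M b\<in>(Basis::'a set). lborel) (\<lambda>f. ennreal (\<Prod>b\<in>Basis. normal_density 0 \<sigma> (f b)))"
    by (rule density_cong) (auto simp: inner_sum_basis intro!: AE_I2 prod.cong)
  have "(iso_gaussian \<sigma> :: 'a measure) = density lborel ?g" unfolding iso_gaussian_def ..
  also have "\<dots> = density (distr (\<Pi>\<^sub>M b\<in>(Basis::'a set). lborel) borel ?S) ?g"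
    by (subst lborel_eq) rule
  also have "\<dots> = distr (density (\<Pi>\<^sub>M b\<in>(Basis::'a set). lborel) (\<lambda>f. ?g (?S f))) borel ?S"
    by (rule density_distr) auto
  also have "\<dots> = distr (\<Pi>\<^sub>M b\<in>(Basis::'a set). NN \<sigma>) borel ?S"
    unfolding e1 density_PiM_eq[OF s] ..
  finally show ?thesis .
qed

context fixes \<sigma> :: real assumes s: "0 < \<sigma>"
begin

abbreviation Om :: "('a::euclidean_space \<Rightarrow> real) measure" where
  "Om \<equiv> \<Pi>\<^sub>M b\<in>(Basis::'a set). NN \<sigma>"

lemma Om_prob: "prob_space (Om :: ('a::euclidean_space \<Rightarrow> real) measure)"
  by (rule prob_space_PiM) (rule prob_space_normal_density, simp add: s)

lemma NN_prob: "prob_space (NN \<sigma>)"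
  by (rule prob_space_normal_density) (simp add: s)

lemma coord_distr: assumes b: "(b::'a::euclidean_space) \<in> Basis"
  shows "distr (Om :: ('a \<Rightarrow> real) measure) lborel (\<lambda>f. f b) = NN \<sigma>"
proof -
  have "distr (Om :: ('a \<Rightarrow> real) measure) lborel (\<lambda>f. f b) = distr (Om :: ('a \<Rightarrow> real) measure) (NN \<sigma>) (\<lambda>f. f b)"
    by (rule distr_cong) auto
  also have "\<dots> = NN \<sigma>" by (rule distr_PiM_component[OF NN_prob b])
  finally show ?thesis .
qed

lemma coord_distributed: assumes b: "(b::'a::euclidean_space) \<in> Basis"
  shows "distributed (Om :: ('a \<Rightarrow> real) measure) lborel (\<lambda>f. f b) (\<lambda>y. ennreal (normal_density 0 \<sigma> y))"
  unfolding distributed_def using coord_distr[OF b] b by auto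

lemma coord_indep:
  "prob_space.indep_vars (Om :: ('a::euclidean_space \<Rightarrow> real) measure) (\<lambda>_. borel) (\<lambda>b f. f b) Basis"
proof -
  interpret O: prob_space "Om :: ('a \<Rightarrow> real) measure" by (rule Om_prob)
  have ne: "(Basis :: 'a set) \<noteq> {}" by simp
  show ?thesis
  proof (subst O.indep_vars_iff_distr_eq_PiM'[OF ne])
    fix i :: 'a assume i: "i \<in> Basis"
    have "(\<lambda>f. f i) \<in> measurable (Om :: ('a \<Rightarrow> real) measure) (NN \<sigma>)"
      using i by (rule measurable_component_singleton)
    moreover have "measurable (Om :: ('a \<Rightarrow> real) measure) (NN \<sigma>) = measurable (Om :: ('a \<Rightarrow> real) measure) borel"
      by (rule measurable_cong_sets) auto
    ultimately show "(\<lambda>f. f i) \<in> measurable (Om :: ('a \<Rightarrow> real) measure) borel" by simp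
  next
    have l: "distr (Om :: ('a \<Rightarrow> real) measure) (\<Pi>\<^sub>M i\<in>(Basis::'a set). borel) (\<lambda>x. \<lambda>i\<in>Basis. x i)
        = distr (Om :: ('a \<Rightarrow> real) measure) (\<Pi>\<^sub>M i\<in>(Basis::'a set). borel) (\<lambda>x. x)"
      by (rule distr_cong) (auto simp: space_PiM PiE_def extensional_restrict)
    also have "\<dots> = (Om :: ('a \<Rightarrow> real) measure)"
      by (rule distr_id2) (simp cong: sets_PiM_cong)
    also have "\<dots> = (\<Pi>\<^sub>M i\<in>(Basis::'a set). distr (Om :: ('a \<Rightarrow> real) measure) borel (\<lambda>f. f i))"
    proof (rule PiM_cong[OF refl])
      fix i :: 'a assume i: "i \<in> Basis"
      have "distr (Om :: ('a \<Rightarrow> real) measure) borel (\<lambda>f. f i) = distr (Om :: ('a \<Rightarrow> real) measure) lborel (\<lambda>f. f i)"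
        by (rule distr_cong) auto
      then show "NN \<sigma> = distr (Om :: ('a \<Rightarrow> real) measure) borel (\<lambda>f. f i)" using coord_distr[OF i] by simp
    qed
    finally show "distr (Om :: ('a \<Rightarrow> real) measure) (\<Pi>\<^sub>M i\<in>(Basis::'a set). borel) (\<lambda>x. \<lambda>i\<in>Basis. x i)
        = (\<Pi>\<^sub>M i\<in>(Basis::'a set). distr (Om :: ('a \<Rightarrow> real) measure) borel (\<lambda>f. f i))" .
  qed
qed

lemma norm_sq_basis: fixes \<theta> :: "'a::euclidean_space"
  shows "(\<Sum>b\<in>Basis. (\<theta> \<bullet> b) ^ 2) = (norm \<theta>) ^ 2"
proof -
  have "(norm \<theta>) ^ 2 = \<theta> \<bullet> \<theta>" by (rule power2_norm_eq_inner)
  also have "\<dots> = (\<Sum>b\<in>Basis. (\<theta> \<bullet> b) * (\<theta> \<bullet> b))" by (rule euclidean_inner)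
  finally show ?thesis by (simp add: power2_eq_square)
qed

lemma lin_distributed:
  fixes \<theta> :: "'a::euclidean_space" assumes th: "\<theta> \<noteq> 0"
  shows "distributed (Om :: ('a \<Rightarrow> real) measure) lborel (\<lambda>f. \<theta> \<bullet> (\<Sum>b\<in>Basis. f b *\<^sub>R b))
     (\<lambda>y. ennreal (normal_density 0 (\<sigma> * norm \<theta>) y))"
proof -
  interpret O: prob_space "Om :: ('a \<Rightarrow> real) measure" by (rule Om_prob)
  define I where "I = {b\<in>(Basis::'a set). \<theta> \<bullet> b \<noteq> 0}"
  have fI: "finite I" unfolding I_def by simp
  have Ine: "I \<noteq> {}"
  proof
    assume "I = {}"
    then have "\<forall>b\<in>Basis. \<theta> \<bullet> b = 0" unfolding I_def by auto
    then have "\<theta> = 0" using euclidean_all_zero_iff by blast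
    with th show False by simp
  qed
  have IB: "I \<subseteq> Basis" unfolding I_def by auto
  have ind: "O.indep_vars (\<lambda>_. borel) (\<lambda>b f. (\<theta> \<bullet> b) * f b) I"
  proof -
    have "O.indep_vars (\<lambda>_. borel) (\<lambda>b f. (\<lambda>x. (\<theta> \<bullet> b) * x) (f b)) Basis"
      by (rule O.indep_vars_compose2[OF coord_indep]) auto
    then show ?thesis by (rule O.indep_vars_subset) (rule IB)
  qed
  have dist: "distributed (Om :: ('a \<Rightarrow> real) measure) lborel (\<lambda>f. (\<theta> \<bullet> b) * f b) (normal_density 0 (\<bar>\<theta> \<bullet> b\<bar> * \<sigma>))"
    if b: "b \<in> I" for b
  proof -
    have bB: "b \<in> Basis" and nz: "\<theta> \<bullet> b \<noteq> 0" using b unfolding I_def by auto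
    have "distributed (Om :: ('a \<Rightarrow> real) measure) lborel (\<lambda>x. 0 + (\<theta> \<bullet> b) * x b) (normal_density (0 + (\<theta> \<bullet> b) * 0) (\<bar>\<theta> \<bullet> b\<bar> * \<sigma>))"
      by (rule O.normal_density_affine[OF coord_distributed[OF bB] s nz])
    then show ?thesis by simp
  qed
  have "distributed (Om :: ('a \<Rightarrow> real) measure) lborel (\<lambda>f. \<Sum>b\<in>I. (\<theta> \<bullet> b) * f b)
      (normal_density (\<Sum>b\<in>I. 0) (sqrt (\<Sum>b\<in>I. (\<bar>\<theta> \<bullet> b\<bar> * \<sigma>)\<^sup>2)))"
    by (rule O.sum_indep_normal[OF fI Ine ind]) (use s I_def dist in auto)
  moreover have "sqrt (\<Sum>b\<in>I. (\<bar>\<theta> \<bullet> b\<bar> * \<sigma>)\<^sup>2) = \<sigma> * norm \<theta>"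
  proof -
    have "(\<Sum>b\<in>I. (\<bar>\<theta> \<bullet> b\<bar> * \<sigma>)\<^sup>2) = \<sigma>\<^sup>2 * (\<Sum>b\<in>I. (\<theta> \<bullet> b)\<^sup>2)"
      by (simp add: sum_distrib_left power_mult_distrib mult.commute)
    also have "(\<Sum>b\<in>I. (\<theta> \<bullet> b)\<^sup>2) = (\<Sum>b\<in>Basis. (\<theta> \<bullet> b)\<^sup>2)"
      by (rule sum.mono_neutral_left) (auto simp: I_def)
    also have "\<dots> = (norm \<theta>)\<^sup>2" by (rule norm_sq_basis)
    finally have "(\<Sum>b\<in>I. (\<bar>\<theta> \<bullet> b\<bar> * \<sigma>)\<^sup>2) = (\<sigma> * norm \<theta>)\<^sup>2" by (simp add: power_mult_distrib)
    then show ?thesis using s by simp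
  qed
  moreover have "(\<lambda>f. \<theta> \<bullet> (\<Sum>b\<in>Basis. f b *\<^sub>R b)) = (\<lambda>f. \<Sum>b\<in>I. (\<theta> \<bullet> b) * f b)"
  proof
    fix f :: "'a \<Rightarrow> real"
    have "\<theta> \<bullet> (\<Sum>b\<in>Basis. f b *\<^sub>R b) = (\<Sum>b\<in>Basis. (\<theta> \<bullet> b) * f b)"
      by (simp add: inner_sum_right mult.commute)
    also have "\<dots> = (\<Sum>b\<in>I. (\<theta> \<bullet> b) * f b)"
      by (rule sum.mono_neutral_right) (auto simp: I_def)
    finally show "\<theta> \<bullet> (\<Sum>b\<in>Basis. f b *\<^sub>R b) = (\<Sum>b\<in>I. (\<theta> \<bullet> b) * f b)" .
  qed
  ultimately show ?thesis by simp
qed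

lemma lin_distr_iso:
  fixes \<theta> :: "'a::euclidean_space" assumes th: "\<theta> \<noteq> 0"
  shows "distr (iso_gaussian \<sigma> :: 'a measure) lborel (\<lambda>x. \<theta> \<bullet> x) = NN (\<sigma> * norm \<theta>)"
proof -
  have "distr (iso_gaussian \<sigma> :: 'a measure) lborel (\<lambda>x. \<theta> \<bullet> x)
     = distr (distr (Om :: ('a \<Rightarrow> real) measure) borel (\<lambda>f. \<Sum>b\<in>Basis. f b *\<^sub>R b)) lborel (\<lambda>x. \<theta> \<bullet> x)"
    by (simp only: iso_gaussian_distr[OF s])
  also have "\<dots> = distr (Om :: ('a \<Rightarrow> real) measure) lborel ((\<lambda>x. \<theta> \<bullet> x) \<circ> (\<lambda>f. \<Sum>b\<in>Basis. f b *\<^sub>R b))"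
    by (rule distr_distr) auto
  also have "\<dots> = NN (\<sigma> * norm \<theta>)"
    using lin_distributed[OF th] unfolding distributed_def comp_def by simp
  finally show ?thesis .
qed

end

lemma NN_std_integrable:
  fixes s :: real and F :: "real \<Rightarrow> real" assumes s: "0 < s" and F[measurable]: "F \<in> borel_measurable borel"
  shows "integrable (NN s) F \<longleftrightarrow> integrable lborel (\<lambda>z. std_normal_density z * F (s * z))"
proof -
  have e: "\<And>z. normal_density 0 s (s * z) * F (s * z) = (1/s) * (std_normal_density z * F (s * z))"
    using s by (simp add: normal_density_def real_sqrt_mult power_mult_distrib field_simps)
  have "integrable (NN s) F \<longleftrightarrow> integrable lborel (\<lambda>y. normal_density 0 s y * F y)"
    by (subst integrable_density) auto
  also have "\<dots> \<longleftrightarrow> integrable lborel (\<lambda>z. normal_density 0 s (0 + s * z) * F (0 + s * z))"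
    using s by (subst lborel_integrable_real_affine_iff[where c=s and t=0, symmetric]) auto
  also have "\<dots> \<longleftrightarrow> integrable lborel (\<lambda>z. (1/s) * (std_normal_density z * F (s * z)))"
    by (simp only: add_0 e)
  also have "\<dots> \<longleftrightarrow> integrable lborel (\<lambda>z. std_normal_density z * F (s * z))"
    using s by (subst integrable_mult_left_iff) simp
  finally show ?thesis .
qed

lemma NN_std_integral:
  fixes s :: real and F :: "real \<Rightarrow> real" assumes s: "0 < s" and F[measurable]: "F \<in> borel_measurable borel"
  shows "integral\<^sup>L (NN s) F = integral\<^sup>L lborel (\<lambda>z. std_normal_density z * F (s * z))"
proof -
  have e: "\<And>z. normal_density 0 s (s * z) * F (s * z) = (1/s) * (std_normal_density z * F (s * z))"
    using s by (simp add: normal_density_def real_sqrt_mult power_mult_distrib field_simps)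
  have "integral\<^sup>L (NN s) F = integral\<^sup>L lborel (\<lambda>y. normal_density 0 s y * F y)"
    by (subst integral_density) auto
  also have "\<dots> = \<bar>s\<bar> * integral\<^sup>L lborel (\<lambda>z. normal_density 0 s (0 + s * z) * F (0 + s * z))"
    using s by (subst lborel_integral_real_affine[where c=s and t=0]) auto
  also have "\<dots> = s * integral\<^sup>L lborel (\<lambda>z. (1/s) * (std_normal_density z * F (s * z)))"
    using s by (simp only: add_0 e abs_of_pos)
  also have "\<dots> = integral\<^sup>L lborel (\<lambda>z. std_normal_density z * F (s * z))"
    using s by simp
  finally show ?thesis .
qed

context fixes \<sigma> :: real assumes s: "0 < \<sigma>"
begin

lemma lin_integral:
  fixes \<theta> :: "'a::euclidean_space" and F :: "real \<Rightarrow> real"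
  assumes th: "\<theta> \<noteq> 0" and F[measurable]: "F \<in> borel_measurable borel"
  shows "integral\<^sup>L (iso_gaussian \<sigma>) (\<lambda>x. F (\<theta> \<bullet> x)) = integral\<^sup>L lborel (\<lambda>z. std_normal_density z * F (\<sigma> * norm \<theta> * z))"
    and "integrable (iso_gaussian \<sigma>) (\<lambda>x. F (\<theta> \<bullet> x)) \<longleftrightarrow> integrable lborel (\<lambda>z. std_normal_density z * F (\<sigma> * norm \<theta> * z))"
proof -
  have sp: "0 < \<sigma> * norm \<theta>" using s th by simp
  have meas: "(\<lambda>x. \<theta> \<bullet> x) \<in> measurable (iso_gaussian \<sigma> :: 'a measure) lborel"
    by (simp add: iso_gaussian_def)
  have "integral\<^sup>L (iso_gaussian \<sigma>) (\<lambda>x. F (\<theta> \<bullet> x)) = integral\<^sup>L (distr (iso_gaussian \<sigma> :: 'a measure) lborel (\<lambda>x. \<theta> \<bullet> x)) F"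
    by (rule integral_distr[OF meas, symmetric]) simp
  also have "\<dots> = integral\<^sup>L (NN (\<sigma> * norm \<theta>)) F" by (simp only: lin_distr_iso[OF s th])
  also have "\<dots> = integral\<^sup>L lborel (\<lambda>z. std_normal_density z * F (\<sigma> * norm \<theta> * z))"
    by (rule NN_std_integral[OF sp F])
  finally show "integral\<^sup>L (iso_gaussian \<sigma>) (\<lambda>x. F (\<theta> \<bullet> x)) = integral\<^sup>L lborel (\<lambda>z. std_normal_density z * F (\<sigma> * norm \<theta> * z))" .
  have "integrable (iso_gaussian \<sigma>) (\<lambda>x. F (\<theta> \<bullet> x)) \<longleftrightarrow> integrable (distr (iso_gaussian \<sigma> :: 'a measure) lborel (\<lambda>x. \<theta> \<bullet> x)) F"
    by (rule integrable_distr_eq[OF meas, symmetric]) simp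
  also have "\<dots> \<longleftrightarrow> integrable (NN (\<sigma> * norm \<theta>)) F" by (simp only: lin_distr_iso[OF s th])
  also have "\<dots> \<longleftrightarrow> integrable lborel (\<lambda>z. std_normal_density z * F (\<sigma> * norm \<theta> * z))"
    by (rule NN_std_integrable[OF sp F])
  finally show "integrable (iso_gaussian \<sigma>) (\<lambda>x. F (\<theta> \<bullet> x)) \<longleftrightarrow> integrable lborel (\<lambda>z. std_normal_density z * F (\<sigma> * norm \<theta> * z))" .
qed

lemma integrable_id_iso: "integrable (iso_gaussian \<sigma> :: 'a::euclidean_space measure) (\<lambda>x. x)"
proof -
  have comp: "integrable (iso_gaussian \<sigma> :: 'a measure) (\<lambda>x. x \<bullet> b)" if b: "b \<in> Basis" for b :: 'a
  proof -
    have bn: "b \<noteq> 0" using b by auto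
    have i1: "integrable lborel (\<lambda>z. std_normal_density z * z)" using integrable_std_normal_moment[of 1] by simp
    have "integrable lborel (\<lambda>z. (\<sigma> * norm b) * (std_normal_density z * z))" using i1 by (rule integrable_mult_right)
    then have "integrable lborel (\<lambda>z. std_normal_density z * (\<sigma> * norm b * z))" by (simp add: ac_simps)
    then have "integrable (iso_gaussian \<sigma> :: 'a measure) (\<lambda>x. (\<lambda>t. t) (b \<bullet> x))"
      using lin_integral(2)[OF bn, of "\<lambda>t. t"] by simp
    then show ?thesis by (simp add: inner_commute)
  qed
  have c2: "\<And>b. b \<in> Basis \<Longrightarrow> integrable (iso_gaussian \<sigma> :: 'a measure) (\<lambda>x. (x \<bullet> b) *\<^sub>R b)"
    using comp by (intro integrable_scaleR_left) auto
  have "integrable (iso_gaussian \<sigma> :: 'a measure) (\<lambda>x. \<Sum>b\<in>Basis. (x \<bullet> b) *\<^sub>R b)"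
    using Bochner_Integration.integrable_sum[where I=Basis and M="iso_gaussian \<sigma> :: 'a measure" and f="\<lambda>b x. (x \<bullet> b) *\<^sub>R b", OF c2] by simp
  then show ?thesis by (simp add: euclidean_representation)
qed

end

lemma EM_weight_tanh:
  fixes \<sigma> :: real and \<theta> x :: "'a::euclidean_space" assumes s: "0 < \<sigma>"
  shows "2 * EM_weight \<sigma> \<theta> x - 1 = tanh (\<theta> \<bullet> x / \<sigma>\<^sup>2)"
proof -
  define u where "u = \<theta> \<bullet> x / \<sigma>\<^sup>2"
  define K where "K = - ((norm \<theta>)\<^sup>2 + (norm x)\<^sup>2) / (2 * \<sigma>\<^sup>2)"
  have n1: "(norm (\<theta> - x))\<^sup>2 = (norm \<theta>)\<^sup>2 - 2 * (\<theta> \<bullet> x) + (norm x)\<^sup>2"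
    by (simp add: power2_norm_eq_inner inner_diff_left inner_diff_right inner_commute)
  have n2: "(norm (\<theta> + x))\<^sup>2 = (norm \<theta>)\<^sup>2 + 2 * (\<theta> \<bullet> x) + (norm x)\<^sup>2"
    by (simp add: power2_norm_eq_inner inner_add_left inner_add_right inner_commute)
  have A: "exp (- (norm (\<theta> - x))\<^sup>2 / (2 * \<sigma>\<^sup>2)) = exp K * exp u"
    unfolding n1 K_def u_def mult_exp_exp using s by (intro arg_cong[where f=exp]) (simp add: field_simps)
  have B: "exp (- (norm (\<theta> + x))\<^sup>2 / (2 * \<sigma>\<^sup>2)) = exp K * exp (-u)"
    unfolding n2 K_def u_def mult_exp_exp using s by (intro arg_cong[where f=exp]) (simp add: field_simps)
  have pos: "0 < exp u + exp (-u)" by (simp add: add_pos_pos)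
  have "2 * EM_weight \<sigma> \<theta> x - 1 = 2 * (exp K * exp u / (exp K * exp u + exp K * exp (-u))) - 1"
    unfolding EM_weight_def A B ..
  also have "exp K * exp u / (exp K * exp u + exp K * exp (-u)) = exp u / (exp u + exp (-u))"
    by (simp add: distrib_left[symmetric])
  also have "2 * (exp u / (exp u + exp (-u))) - 1 = (exp u - exp (-u)) / (exp u + exp (-u))"
    using pos by (simp add: field_simps)
  also have "\<dots> = tanh u" by (simp add: tanh_altdef)
  finally show ?thesis unfolding u_def .
qed

definition Lf :: "real \<Rightarrow> real \<Rightarrow> real" where "Lf \<sigma> t = \<sigma>\<^sup>2 * ln (cosh (t / \<sigma>\<^sup>2))"

lemma Lf_meas: "Lf \<sigma> \<in> borel_measurable borel"
  unfolding Lf_def divide_inverse by (intro borel_measurable_continuous_onI) (auto intro!: continuous_intros)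

lemma tanh_meas: "(\<lambda>t. tanh (t / c)) \<in> borel_measurable (borel :: real measure)"
  unfolding divide_inverse by (intro borel_measurable_continuous_onI) (auto intro!: continuous_intros)

context fixes \<sigma> :: real assumes s: "0 < \<sigma>"
begin

lemma Lf_lip: "\<bar>Lf \<sigma> t' - Lf \<sigma> t\<bar> \<le> \<bar>t' - t\<bar>"
proof -
  have "\<bar>ln (cosh (t' / \<sigma>\<^sup>2)) - ln (cosh (t / \<sigma>\<^sup>2))\<bar> \<le> \<bar>t' / \<sigma>\<^sup>2 - t / \<sigma>\<^sup>2\<bar>" by (rule ln_cosh_lip)
  then have "\<sigma>\<^sup>2 * \<bar>ln (cosh (t' / \<sigma>\<^sup>2)) - ln (cosh (t / \<sigma>\<^sup>2))\<bar> \<le> \<sigma>\<^sup>2 * \<bar>t' / \<sigma>\<^sup>2 - t / \<sigma>\<^sup>2\<bar>"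
    by (intro mult_left_mono) auto
  also have "\<sigma>\<^sup>2 * \<bar>t' / \<sigma>\<^sup>2 - t / \<sigma>\<^sup>2\<bar> = \<bar>t' - t\<bar>" using s by (simp add: diff_divide_distrib[symmetric] abs_divide)
  also have "\<sigma>\<^sup>2 * \<bar>ln (cosh (t' / \<sigma>\<^sup>2)) - ln (cosh (t / \<sigma>\<^sup>2))\<bar> = \<bar>Lf \<sigma> t' - Lf \<sigma> t\<bar>"
    unfolding Lf_def by (simp add: right_diff_distrib[symmetric] abs_mult)
  finally show ?thesis .
qed

lemma Lf_abs: "\<bar>Lf \<sigma> t\<bar> \<le> \<bar>t\<bar>"
  using Lf_lip[of t 0] by (simp add: Lf_def)

lemma Lf_conv: "tanh (t / \<sigma>\<^sup>2) * (t' - t) \<le> Lf \<sigma> t' - Lf \<sigma> t"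
proof -
  have "ln (cosh (t / \<sigma>\<^sup>2)) + tanh (t / \<sigma>\<^sup>2) * (t' / \<sigma>\<^sup>2 - t / \<sigma>\<^sup>2) \<le> ln (cosh (t' / \<sigma>\<^sup>2))"
    by (rule ln_cosh_convex)
  then have "\<sigma>\<^sup>2 * (tanh (t / \<sigma>\<^sup>2) * (t' / \<sigma>\<^sup>2 - t / \<sigma>\<^sup>2)) \<le> \<sigma>\<^sup>2 * (ln (cosh (t' / \<sigma>\<^sup>2)) - ln (cosh (t / \<sigma>\<^sup>2)))"
    by (intro mult_left_mono) auto
  moreover have "\<sigma>\<^sup>2 * (tanh (t / \<sigma>\<^sup>2) * (t' / \<sigma>\<^sup>2 - t / \<sigma>\<^sup>2)) = tanh (t / \<sigma>\<^sup>2) * (t' - t)"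
    using s by (simp add: field_simps)
  moreover have "\<sigma>\<^sup>2 * (ln (cosh (t' / \<sigma>\<^sup>2)) - ln (cosh (t / \<sigma>\<^sup>2))) = Lf \<sigma> t' - Lf \<sigma> t"
    unfolding Lf_def by (simp add: right_diff_distrib)
  ultimately show ?thesis by simp
qed

abbreviation G :: "'a::euclidean_space measure" where "G \<equiv> iso_gaussian \<sigma>"

lemma sets_G[simp, measurable_cong]: "sets (G :: 'a::euclidean_space measure) = sets borel"
  by (simp add: iso_gaussian_def)

lemma integrable_norm_G: "integrable (G :: 'a::euclidean_space measure) (\<lambda>x. norm x)"
  using integrable_norm[OF integrable_id_iso[OF s]] by simp

lemma integrable_L: "integrable (G :: 'a::euclidean_space measure) (\<lambda>x. Lf \<sigma> (\<theta> \<bullet> x))"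
proof (rule Bochner_Integration.integrable_bound[OF integrable_mult_right[OF integrable_norm_G, of "norm \<theta>"]])
  show "(\<lambda>x. Lf \<sigma> (\<theta> \<bullet> x)) \<in> borel_measurable (G :: 'a measure)"
    using Lf_meas[of \<sigma>] by measurable
  show "AE x in G. norm (Lf \<sigma> (\<theta> \<bullet> x)) \<le> norm (norm \<theta> * norm x)"
    using Lf_abs Cauchy_Schwarz_ineq2[of \<theta>] by (intro AE_I2) (auto intro: order_trans)
qed

lemma integrable_T: "integrable (G :: 'a::euclidean_space measure) (\<lambda>x. tanh (\<theta> \<bullet> x / \<sigma>\<^sup>2) * (x \<bullet> v))"
proof (rule Bochner_Integration.integrable_bound[OF integrable_mult_right[OF integrable_norm_G, of "norm v"]])
  show "(\<lambda>x. tanh (\<theta> \<bullet> x / \<sigma>\<^sup>2) * (x \<bullet> v)) \<in> borel_measurable (G :: 'a measure)"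
    using tanh_meas[of "\<sigma>\<^sup>2"] by measurable
  show "AE x in G. norm (tanh (\<theta> \<bullet> x / \<sigma>\<^sup>2) * (x \<bullet> v)) \<le> norm (norm v * norm x)"
  proof (intro AE_I2)
    fix x :: 'a
    have t: "\<bar>tanh (\<theta> \<bullet> x / \<sigma>\<^sup>2)\<bar> \<le> 1" using tanh_real_bounds[of "\<theta> \<bullet> x / \<sigma>\<^sup>2"] by auto
    have "\<bar>tanh (\<theta> \<bullet> x / \<sigma>\<^sup>2)\<bar> * \<bar>x \<bullet> v\<bar> \<le> 1 * \<bar>x \<bullet> v\<bar>" using t by (intro mult_right_mono) auto
    also have "\<dots> \<le> norm v * norm x" using Cauchy_Schwarz_ineq2[of x v] by (simp add: mult.commute)
    finally show "norm (tanh (\<theta> \<bullet> x / \<sigma>\<^sup>2) * (x \<bullet> v)) \<le> norm (norm v * norm x)" by (simp add: abs_mult)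
  qed
qed

lemma integrable_TR: "integrable (G :: 'a::euclidean_space measure) (\<lambda>x. tanh (\<theta> \<bullet> x / \<sigma>\<^sup>2) *\<^sub>R x)"
proof (rule Bochner_Integration.integrable_bound[OF integrable_norm_G])
  show "(\<lambda>x. tanh (\<theta> \<bullet> x / \<sigma>\<^sup>2) *\<^sub>R x) \<in> borel_measurable (G :: 'a measure)"
    using tanh_meas[of "\<sigma>\<^sup>2"] by measurable
  show "AE x in G. norm (tanh (\<theta> \<bullet> x / \<sigma>\<^sup>2) *\<^sub>R x) \<le> norm (norm x)"
  proof (intro AE_I2)
    fix x :: 'a
    have t: "\<bar>tanh (\<theta> \<bullet> x / \<sigma>\<^sup>2)\<bar> \<le> 1" using tanh_real_bounds[of "\<theta> \<bullet> x / \<sigma>\<^sup>2"] by auto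
    then show "norm (tanh (\<theta> \<bullet> x / \<sigma>\<^sup>2) *\<^sub>R x) \<le> norm (norm x)"
      using mult_right_mono[OF t, of "norm x"] by simp
  qed
qed

lemma EM_pop_eq: "EM_pop \<sigma> (\<theta>::'a::euclidean_space) = integral\<^sup>L G (\<lambda>x. tanh (\<theta> \<bullet> x / \<sigma>\<^sup>2) *\<^sub>R x)"
  unfolding EM_pop_def by (rule Bochner_Integration.integral_cong[OF refl]) (simp add: EM_weight_tanh[OF s])

lemma EM_inner: "EM_pop \<sigma> (\<theta>::'a::euclidean_space) \<bullet> v = integral\<^sup>L G (\<lambda>x. tanh (\<theta> \<bullet> x / \<sigma>\<^sup>2) * (x \<bullet> v))"
proof -
  have "EM_pop \<sigma> \<theta> \<bullet> v = integral\<^sup>L G (\<lambda>x. (tanh (\<theta> \<bullet> x / \<sigma>\<^sup>2) *\<^sub>R x) \<bullet> v)"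
    unfolding EM_pop_eq using integrable_TR by (subst integral_inner_left) auto
  then show ?thesis by simp
qed

end

lemma tm_zero: fixes m K :: real assumes K: "0 \<le> K" and h: "\<And>t. t \<noteq> 0 \<Longrightarrow> t * m \<le> K * t ^ 2"
  shows "m = 0"
proof (rule ccontr)
  assume m: "m \<noteq> 0"
  define t where "t = m / (2 * (K + 1))"
  have K1: "0 < K + 1" using K by simp
  have t0: "t \<noteq> 0" using m K1 unfolding t_def by simp
  have "t * m \<le> K * t ^ 2" by (rule h[OF t0])
  moreover have tm: "t * m = m ^ 2 / (2 * (K + 1))" unfolding t_def by (simp add: power2_eq_square)
  moreover have "K * t ^ 2 = (m ^ 2 / (2 * (K + 1))) * (K / (2 * (K + 1)))" unfolding t_def using K1
    by (simp add: power2_eq_square)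
  moreover have X: "0 < m ^ 2 / (2 * (K + 1))" using m K1 by simp
  moreover have "K / (2 * (K + 1)) < 1" using K K1 by simp
  ultimately have "m ^ 2 / (2 * (K + 1)) \<le> (m ^ 2 / (2 * (K + 1))) * (K / (2 * (K + 1)))" by simp
  moreover have "(m ^ 2 / (2 * (K + 1))) * (K / (2 * (K + 1))) < (m ^ 2 / (2 * (K + 1))) * 1"
    using X \<open>K / (2 * (K + 1)) < 1\<close> by (intro mult_strict_left_mono) auto
  ultimately show False by simp
qed

lemma sqrt_diff_le: fixes n q :: real assumes n: "0 < n" and q: "0 \<le> q"
  shows "sqrt (n ^ 2 + q) - n \<le> q / n"
proof -
  have "n ^ 2 + q \<le> (n + q / n) ^ 2" using n q by (simp add: power2_eq_square field_simps)
  then have "sqrt (n ^ 2 + q) \<le> sqrt ((n + q / n) ^ 2)" by (rule real_sqrt_le_mono)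
  also have "\<dots> = n + q / n" using n q by simp
  finally show ?thesis by simp
qed

context fixes \<sigma> :: real assumes s: "0 < \<sigma>"
begin

lemma Phi_lip:
  fixes \<theta>1 \<theta>2 :: "'a::euclidean_space" assumes t1: "\<theta>1 \<noteq> 0" and t2: "\<theta>2 \<noteq> 0"
  shows "integral\<^sup>L (G \<sigma>) (\<lambda>x. Lf \<sigma> (\<theta>1 \<bullet> x)) - integral\<^sup>L (G \<sigma>) (\<lambda>x. Lf \<sigma> (\<theta>2 \<bullet> x))
     \<le> \<sigma> * \<bar>norm \<theta>1 - norm \<theta>2\<bar>"
proof -
  let ?n1 = "norm \<theta>1" let ?n2 = "norm \<theta>2"
  let ?f1 = "\<lambda>z. std_normal_density z * Lf \<sigma> (\<sigma> * ?n1 * z)"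
  let ?f2 = "\<lambda>z. std_normal_density z * Lf \<sigma> (\<sigma> * ?n2 * z)"
  have i1: "integrable lborel ?f1" using lin_integral(2)[OF s t1 Lf_meas[of \<sigma>]] integrable_L[OF s, of \<theta>1] by simp
  have i2: "integrable lborel ?f2" using lin_integral(2)[OF s t2 Lf_meas[of \<sigma>]] integrable_L[OF s, of \<theta>2] by simp
  have one: "(0::real) < 1" by simp
  have hb: "has_bochner_integral lborel (\<lambda>z. (\<sigma> * \<bar>?n1 - ?n2\<bar>) * (std_normal_density z * \<bar>z\<bar>)) ((\<sigma> * \<bar>?n1 - ?n2\<bar>) * sqrt (2/pi))"
    using has_bochner_integral_mult_right[OF mom_abs1[OF one]] by simp
  have "integral\<^sup>L (G \<sigma>) (\<lambda>x. Lf \<sigma> (\<theta>1 \<bullet> x)) - integral\<^sup>L (G \<sigma>) (\<lambda>x. Lf \<sigma> (\<theta>2 \<bullet> x))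
      = integral\<^sup>L lborel ?f1 - integral\<^sup>L lborel ?f2"
    using lin_integral(1)[OF s t1 Lf_meas[of \<sigma>]] lin_integral(1)[OF s t2 Lf_meas[of \<sigma>]] by simp
  also have "\<dots> = integral\<^sup>L lborel (\<lambda>z. ?f1 z - ?f2 z)" by (rule Bochner_Integration.integral_diff[OF i1 i2, symmetric])
  also have "\<dots> \<le> integral\<^sup>L lborel (\<lambda>z. (\<sigma> * \<bar>?n1 - ?n2\<bar>) * (std_normal_density z * \<bar>z\<bar>))"
  proof (rule integral_mono[OF Bochner_Integration.integrable_diff[OF i1 i2] integrable.intros[OF hb]])
    fix z :: real
    have "Lf \<sigma> (\<sigma> * ?n1 * z) - Lf \<sigma> (\<sigma> * ?n2 * z) \<le> \<bar>\<sigma> * ?n1 * z - \<sigma> * ?n2 * z\<bar>"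
      using Lf_lip[OF s, of "\<sigma> * ?n1 * z" "\<sigma> * ?n2 * z"] by linarith
    also have "\<dots> = \<sigma> * \<bar>?n1 - ?n2\<bar> * \<bar>z\<bar>" using s by (simp add: abs_mult left_diff_distrib[symmetric] right_diff_distrib[symmetric])
    finally have "std_normal_density z * (Lf \<sigma> (\<sigma> * ?n1 * z) - Lf \<sigma> (\<sigma> * ?n2 * z)) \<le> std_normal_density z * (\<sigma> * \<bar>?n1 - ?n2\<bar> * \<bar>z\<bar>)"
      by (intro mult_left_mono) auto
    then show "?f1 z - ?f2 z \<le> (\<sigma> * \<bar>?n1 - ?n2\<bar>) * (std_normal_density z * \<bar>z\<bar>)"
      by (simp add: algebra_simps)
  qed
  also have "\<dots> = (\<sigma> * \<bar>?n1 - ?n2\<bar>) * sqrt (2/pi)" by (rule has_bochner_integral_integral_eq[OF hb])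
  also have "\<dots> \<le> (\<sigma> * \<bar>?n1 - ?n2\<bar>) * 1"
  proof (rule mult_left_mono)
    show "sqrt (2/pi) \<le> 1" using c_le by linarith
  qed (use s in simp)
  finally show ?thesis by simp
qed

lemma EM_orth:
  fixes \<theta> v :: "'a::euclidean_space" assumes th: "\<theta> \<noteq> 0" and ov: "\<theta> \<bullet> v = 0"
  shows "EM_pop \<sigma> \<theta> \<bullet> v = 0"
proof (rule tm_zero)
  let ?m = "EM_pop \<sigma> \<theta> \<bullet> v"
  let ?n = "norm \<theta>"
  have n0: "0 < ?n" using th by simp
  show "0 \<le> \<sigma> * (norm v) ^ 2 / ?n" using s n0 by simp
  fix t :: real assume t0: "t \<noteq> 0"
  have nsq: "(norm (\<theta> + t *\<^sub>R v)) ^ 2 = ?n ^ 2 + t ^ 2 * (norm v) ^ 2"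
  proof -
    have "(norm (\<theta> + t *\<^sub>R v)) ^ 2 = (\<theta> + t *\<^sub>R v) \<bullet> (\<theta> + t *\<^sub>R v)" by (rule power2_norm_eq_inner)
    also have "\<dots> = \<theta> \<bullet> \<theta> + t ^ 2 * (v \<bullet> v)" using ov by (simp add: inner_add_left inner_add_right inner_commute power2_eq_square)
    also have "\<theta> \<bullet> \<theta> = ?n ^ 2" by (simp add: power2_norm_eq_inner)
    also have "v \<bullet> v = (norm v) ^ 2" by (simp add: power2_norm_eq_inner)
    finally show ?thesis .
  qed
  have tv0: "\<theta> + t *\<^sub>R v \<noteq> 0"
  proof
    assume "\<theta> + t *\<^sub>R v = 0"
    then have "?n ^ 2 + t ^ 2 * (norm v) ^ 2 = 0" using nsq by simp
    moreover have "0 \<le> t ^ 2 * (norm v) ^ 2" by simp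
    ultimately show False using n0 by (smt (verit) zero_less_power2)
  qed
  have "t * ?m = integral\<^sup>L (G \<sigma>) (\<lambda>x. tanh (\<theta> \<bullet> x / \<sigma>\<^sup>2) * (t * (x \<bullet> v)))"
    unfolding EM_inner[OF s] by (simp add: mult.left_commute)
  also have "\<dots> \<le> integral\<^sup>L (G \<sigma>) (\<lambda>x. Lf \<sigma> ((\<theta> + t *\<^sub>R v) \<bullet> x) - Lf \<sigma> (\<theta> \<bullet> x))"
  proof (rule integral_mono)
    show "integrable (G \<sigma>) (\<lambda>x. tanh (\<theta> \<bullet> x / \<sigma>\<^sup>2) * (t * (x \<bullet> v)))"
      using integrable_mult_right[OF integrable_T[OF s, of \<theta> v], of t] by (simp add: mult.left_commute)
    show "integrable (G \<sigma>) (\<lambda>x. Lf \<sigma> ((\<theta> + t *\<^sub>R v) \<bullet> x) - Lf \<sigma> (\<theta> \<bullet> x))"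
      by (rule Bochner_Integration.integrable_diff[OF integrable_L[OF s] integrable_L[OF s]])
    fix x :: 'a
    have "tanh (\<theta> \<bullet> x / \<sigma>\<^sup>2) * ((\<theta> + t *\<^sub>R v) \<bullet> x - \<theta> \<bullet> x) \<le> Lf \<sigma> ((\<theta> + t *\<^sub>R v) \<bullet> x) - Lf \<sigma> (\<theta> \<bullet> x)"
      by (rule Lf_conv[OF s])
    moreover have "(\<theta> + t *\<^sub>R v) \<bullet> x - \<theta> \<bullet> x = t * (x \<bullet> v)" by (simp add: inner_add_left inner_commute[of v x])
    ultimately show "tanh (\<theta> \<bullet> x / \<sigma>\<^sup>2) * (t * (x \<bullet> v)) \<le> Lf \<sigma> ((\<theta> + t *\<^sub>R v) \<bullet> x) - Lf \<sigma> (\<theta> \<bullet> x)" by simp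
  qed
  also have "\<dots> = integral\<^sup>L (G \<sigma>) (\<lambda>x. Lf \<sigma> ((\<theta> + t *\<^sub>R v) \<bullet> x)) - integral\<^sup>L (G \<sigma>) (\<lambda>x. Lf \<sigma> (\<theta> \<bullet> x))"
    by (rule Bochner_Integration.integral_diff[OF integrable_L[OF s] integrable_L[OF s]])
  also have "\<dots> \<le> \<sigma> * \<bar>norm (\<theta> + t *\<^sub>R v) - ?n\<bar>" by (rule Phi_lip[OF tv0 th])
  also have "\<bar>norm (\<theta> + t *\<^sub>R v) - ?n\<bar> \<le> t ^ 2 * (norm v) ^ 2 / ?n"
  proof -
    have e: "norm (\<theta> + t *\<^sub>R v) = sqrt (?n ^ 2 + t ^ 2 * (norm v) ^ 2)"
      using nsq by (metis norm_ge_zero real_sqrt_unique)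
    have ge: "?n \<le> norm (\<theta> + t *\<^sub>R v)" unfolding e by (rule real_le_rsqrt) simp
    have "norm (\<theta> + t *\<^sub>R v) - ?n \<le> t ^ 2 * (norm v) ^ 2 / ?n" unfolding e
      by (rule sqrt_diff_le[OF n0]) simp
    then show ?thesis using ge by simp
  qed
  then have "\<sigma> * \<bar>norm (\<theta> + t *\<^sub>R v) - ?n\<bar> \<le> \<sigma> * (t ^ 2 * (norm v) ^ 2 / ?n)" using s by (intro mult_left_mono) auto
  also have "\<dots> = \<sigma> * (norm v) ^ 2 / ?n * t ^ 2" by simp
  finally show "t * ?m \<le> \<sigma> * (norm v) ^ 2 / ?n * t ^ 2" .
qed

lemma EM_parallel:
  fixes \<theta> :: "'a::euclidean_space" assumes th: "\<theta> \<noteq> 0"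
  shows "EM_pop \<sigma> \<theta> = ((EM_pop \<sigma> \<theta> \<bullet> \<theta>) / (norm \<theta>) ^ 2) *\<^sub>R \<theta>"
proof -
  let ?M = "EM_pop \<sigma> \<theta>" let ?c = "(EM_pop \<sigma> \<theta> \<bullet> \<theta>) / (norm \<theta>) ^ 2"
  define v where "v = ?M - ?c *\<^sub>R \<theta>"
  have n0: "(norm \<theta>) ^ 2 \<noteq> 0" using th by simp
  have ov: "\<theta> \<bullet> v = 0" unfolding v_def using n0
    by (simp add: inner_diff_right inner_commute power2_norm_eq_inner[symmetric])
  have "?M \<bullet> v = 0" by (rule EM_orth[OF th ov])
  then have "v \<bullet> v = 0" unfolding v_def using ov unfolding v_def
    by (simp add: inner_diff_left inner_commute)
  then have "v = 0" by simp
  then show ?thesis unfolding v_def by simp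
qed

lemma EM_ratio:
  fixes \<theta> :: "'a::euclidean_space" assumes th: "\<theta> \<noteq> 0"
  shows "norm (EM_pop \<sigma> \<theta>) / norm \<theta> = Rint (norm \<theta> / \<sigma>)"
proof -
  let ?n = "norm \<theta>" let ?a = "norm \<theta> / \<sigma>"
  have n0: "0 < ?n" using th by simp
  have a0: "0 < ?a" using n0 s by simp
  have Fm: "(\<lambda>t. tanh (t / \<sigma>\<^sup>2) * t) \<in> borel_measurable borel" using tanh_meas[of "\<sigma>\<^sup>2"] by measurable
  have "EM_pop \<sigma> \<theta> \<bullet> \<theta> = integral\<^sup>L (G \<sigma>) (\<lambda>x. (\<lambda>t. tanh (t / \<sigma>\<^sup>2) * t) (\<theta> \<bullet> x))"
    unfolding EM_inner[OF s] by (simp add: inner_commute)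
  also have "\<dots> = integral\<^sup>L lborel (\<lambda>z. std_normal_density z * (tanh (\<sigma> * ?n * z / \<sigma>\<^sup>2) * (\<sigma> * ?n * z)))"
    by (rule lin_integral(1)[OF s th Fm])
  finally have mt: "EM_pop \<sigma> \<theta> \<bullet> \<theta> = integral\<^sup>L lborel (\<lambda>z. std_normal_density z * (tanh (\<sigma> * ?n * z / \<sigma>\<^sup>2) * (\<sigma> * ?n * z)))" .
  have "(EM_pop \<sigma> \<theta> \<bullet> \<theta>) / ?n ^ 2 = integral\<^sup>L lborel (\<lambda>z. std_normal_density z * (tanh (\<sigma> * ?n * z / \<sigma>\<^sup>2) * (\<sigma> * ?n * z)) / ?n ^ 2)"
    unfolding mt by simp
  also have "\<dots> = Rint ?a"
  proof (rule Bochner_Integration.integral_cong[OF refl])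
    fix z :: real
    have e1: "\<sigma> * ?n * z / \<sigma>\<^sup>2 = ?a * z" using s by (simp add: power2_eq_square field_simps)
    show "std_normal_density z * (tanh (\<sigma> * ?n * z / \<sigma>\<^sup>2) * (\<sigma> * ?n * z)) / ?n ^ 2 = std_normal_density z * (z * tanh (?a * z) / ?a)"
      unfolding e1 using s n0 by (simp add: power2_eq_square field_simps)
  qed
  finally have c: "(EM_pop \<sigma> \<theta> \<bullet> \<theta>) / ?n ^ 2 = Rint ?a" .
  have "norm (EM_pop \<sigma> \<theta>) = \<bar>(EM_pop \<sigma> \<theta> \<bullet> \<theta>) / ?n ^ 2\<bar> * ?n"
    by (subst EM_parallel[OF th]) simp
  then have nr: "norm (EM_pop \<sigma> \<theta>) / ?n = \<bar>Rint ?a\<bar>" using n0 c by simp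
  have r0: "0 \<le> Rint ?a"
  proof -
    have "0 \<le> integral\<^sup>L lborel (\<lambda>z. std_normal_density z * (z * tanh (?a * z) / ?a))"
    proof (rule integral_nonneg_AE, rule AE_I2)
      fix z :: real
      have az: "0 \<le> ?a * \<bar>z\<bar>" using a0 by (intro mult_nonneg_nonneg) auto
      have "0 \<le> \<bar>z\<bar> * tanh (?a * \<bar>z\<bar>)" using az by (intro mult_nonneg_nonneg) simp_all
      then have "0 \<le> z * tanh (?a * z)" by (simp only: tanh_abs_mult[of z ?a])
      then have "0 \<le> z * tanh (?a * z) / ?a" using a0 by (rule divide_nonneg_pos)
      then show "0 \<le> std_normal_density z * (z * tanh (?a * z) / ?a)"
        by (rule mult_nonneg_nonneg[OF normal_density_nonneg])
    qed
    then show ?thesis .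
  qed
  show ?thesis unfolding nr using r0 by (rule abs_of_nonneg)
qed

end

lemma rhs_aux: fixes p A :: real assumes "0 < 2 + A"
  shows "1 - p + 2 * p / (2 + A) = 1 - p * A / (2 + A)"
  using assms by (simp add: field_simps)

lemma rhs_eq: fixes p n \<sigma> :: real assumes s: "0 < \<sigma>"
  shows "1 - p + p / (1 + n\<^sup>2 / (2 * \<sigma>\<^sup>2)) = 1 - p * (n / \<sigma>) ^ 2 / (2 + (n / \<sigma>) ^ 2)"
proof -
  have d: "0 < 2 + (n / \<sigma>) ^ 2" by (simp add: add_pos_nonneg)
  have "1 + n\<^sup>2 / (2 * \<sigma>\<^sup>2) = (2 + (n / \<sigma>) ^ 2) / 2" using s by (simp add: power_divide field_simps)
  then have "p / (1 + n\<^sup>2 / (2 * \<sigma>\<^sup>2)) = p / ((2 + (n / \<sigma>) ^ 2) / 2)" by (simp only:)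
  also have "\<dots> = 2 * p / (2 + (n / \<sigma>) ^ 2)" by simp
  finally have "p / (1 + n\<^sup>2 / (2 * \<sigma>\<^sup>2)) = 2 * p / (2 + (n / \<sigma>) ^ 2)" .
  then show ?thesis using rhs_aux[OF d, of p] by simp
qed

theorem theorem2:
  fixes \<sigma> :: real
  assumes "\<sigma> > 0"
  shows "(\<forall>\<theta>::'a::euclidean_space. \<theta> \<noteq> 0 \<longrightarrow>
            norm (EM_pop \<sigma> \<theta>) / norm \<theta>
              \<le> 1 - p_const + p_const / (1 + (norm \<theta>)\<^sup>2 / (2 * \<sigma>\<^sup>2))
          \<and> 1 - p_const + p_const / (1 + (norm \<theta>)\<^sup>2 / (2 * \<sigma>\<^sup>2)) < 1)
       \<and> (\<forall>\<theta>::'a. \<theta> \<noteq> 0 \<longrightarrow> (norm \<theta>)\<^sup>2 \<le> 5 * \<sigma>\<^sup>2 / 8 \<longrightarrow>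
            norm (EM_pop \<sigma> \<theta>) / norm \<theta> \<ge> 1 / (1 + 2 * (norm \<theta>)\<^sup>2 / \<sigma>\<^sup>2))"
proof (intro conjI allI impI)
  note s = assms
  fix \<theta> :: 'a assume th: "\<theta> \<noteq> 0"
  let ?a = "norm \<theta> / \<sigma>"
  have a0: "0 < ?a" using th s by simp
  have g0: "0 \<le> ?a ^ 2 / (2 + ?a ^ 2)" by (simp add: add_nonneg_nonneg)
  have gp: "0 < ?a ^ 2 / (2 + ?a ^ 2)" using a0 by (intro divide_pos_pos) (auto intro: add_pos_nonneg)
  have r: "norm (EM_pop \<sigma> \<theta>) / norm \<theta> = Rint ?a" by (rule EM_ratio[OF s th])
  show "norm (EM_pop \<sigma> \<theta>) / norm \<theta> \<le> 1 - p_const + p_const / (1 + (norm \<theta>)\<^sup>2 / (2 * \<sigma>\<^sup>2))"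
  proof -
    have "Rint ?a \<le> 1 - (4207/5000) * ?a ^ 2 / (2 + ?a ^ 2)" by (rule upper_1d[OF a0])
    also have "\<dots> \<le> 1 - p_const * ?a ^ 2 / (2 + ?a ^ 2)"
      using mult_right_mono[OF p_const_bounds(2) g0] by (simp add: times_divide_eq_right)
    also have "\<dots> = 1 - p_const + p_const / (1 + (norm \<theta>)\<^sup>2 / (2 * \<sigma>\<^sup>2))" by (rule rhs_eq[OF s, symmetric])
    finally show ?thesis unfolding r .
  qed
  show "1 - p_const + p_const / (1 + (norm \<theta>)\<^sup>2 / (2 * \<sigma>\<^sup>2)) < 1"
  proof -
    have pp: "0 < p_const" using p_const_bounds(1) by simp
    have "0 < p_const * ?a ^ 2 / (2 + ?a ^ 2)" using pp a0 by (intro divide_pos_pos mult_pos_pos) (auto intro: add_pos_nonneg)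
    then show ?thesis unfolding rhs_eq[OF s] by linarith
  qed
next
  note s = assms
  fix \<theta> :: 'a assume th: "\<theta> \<noteq> 0" and small: "(norm \<theta>)\<^sup>2 \<le> 5 * \<sigma>\<^sup>2 / 8"
  let ?a = "norm \<theta> / \<sigma>"
  have a0: "0 < ?a" using th s by simp
  have a2: "?a ^ 2 \<le> 5/8" using small s by (simp add: power_divide field_simps)
  have r: "norm (EM_pop \<sigma> \<theta>) / norm \<theta> = Rint ?a" by (rule EM_ratio[OF s th])
  have e: "1 + 2 * (norm \<theta>)\<^sup>2 / \<sigma>\<^sup>2 = 1 + 2 * ?a ^ 2" by (simp add: power_divide)
  show "1 / (1 + 2 * (norm \<theta>)\<^sup>2 / \<sigma>\<^sup>2) \<le> norm (EM_pop \<sigma> \<theta>) / norm \<theta>"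
    unfolding r e by (rule lower_1d[OF a0 a2])
qed

end
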